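(* Let $\big(\mathscr N=V\oplus_{\perp}Z,[\cdot\,,\cdot],\langle\cdot\,,\cdot\rangle\big)$ be a general $H$-type algebra. Then there is an orthonormal basis $\{v_1,\ldots,v_m,z_1,\ldots,z_n\}$ of $V\oplus_{\perp}Z$, with $v_1,\ldots,v_m\in V$ and $z_1,\ldots,z_n\in Z$, such that $[v_\alpha,v_\beta]=\sum_{k=1}^{n}A^k_{\alpha\beta}z_k$ where every coefficient $A^k_{\alpha\beta}$ is equal to $1$, $-1$ or $0$.
   Context: A scalar product on a finite-dimensional real vector space is a real symmetric non-degenerate bilinear form (not necessarily positive definite). A basis $\{e_i\}$ is orthonormal for a scalar product if $\langle e_i,e_j\rangle=0$ for $i\neq j$ and $\langle e_i,e_i\rangle\in\{1,-1\}$. A general $H$-type algebra is a 2-step nilpotent real Lie algebra $\mathscr N$ with a scalar product $\langle\cdot\,,\cdot\rangle$ such that: (1) $\mathscr N=V\oplus_\perp Z$, where $Z$ is the center of $\mathscr N$, the restriction of $\langle\cdot\,,\cdot\rangle$ to $Z$ is non-degenerate, and $V$ is the orthogonal complement of $Z$; (2) the map $J\colon Z\to\mathrm{End}(V)$ defined by $\langle J_zu,v\rangle=\langle z,[u,v]\rangle$ for $z\in Z$, $u,v\in V$ satisfies $\langle J_zu,J_zv\rangle=\langle z,z\rangle\langle u,v\rangle$ for all $z\in Z$, $u,v\in V$. *)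

theory Defs
  imports "HOL-Analysis.Analysis"
begin

text \<open>A scalar product: real symmetric non-degenerate bilinear form
  (not necessarily positive definite).\<close>
definition scalar_product :: "('a::real_vector \<Rightarrow> 'a \<Rightarrow> real) \<Rightarrow> bool" where
  "scalar_product g \<longleftrightarrow> bilinear g \<and> (\<forall>x y. g x y = g y x)
      \<and> (\<forall>x. (\<forall>y. g x y = 0) \<longrightarrow> x = 0)"

definition lie_bracket :: "('a::real_vector \<Rightarrow> 'a \<Rightarrow> 'a) \<Rightarrow> bool" where
  "lie_bracket br \<longleftrightarrow> bilinear br \<and> (\<forall>x. br x x = 0)
      \<and> (\<forall>x y w. br x (br y w) + br y (br w x) + br w (br x y) = 0)"

definition two_step_nilpotent :: "('a::real_vector \<Rightarrow> 'a \<Rightarrow> 'a) \<Rightarrow> bool" where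
  "two_step_nilpotent br \<longleftrightarrow> (\<forall>x y w. br x (br y w) = 0) \<and> (\<exists>x y. br x y \<noteq> 0)"

definition lie_center :: "('a::real_vector \<Rightarrow> 'a \<Rightarrow> 'a) \<Rightarrow> 'a set" where
  "lie_center br = {z. \<forall>x. br z x = 0}"

definition orth_compl :: "('a::real_vector \<Rightarrow> 'a \<Rightarrow> real) \<Rightarrow> 'a set \<Rightarrow> 'a set" where
  "orth_compl g S = {v. \<forall>z\<in>S. g v z = 0}"

text \<open>The map J : Z \<rightarrow> End(V) is determined by
  g (J z u) v = g z [u,v] for u, v in V (unique by non-degeneracy of g on V).\<close>
definition general_H_type :: "('a::real_vector \<Rightarrow> 'a \<Rightarrow> 'a) \<Rightarrow> ('a \<Rightarrow> 'a \<Rightarrow> real) \<Rightarrow> bool" where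
  "general_H_type br g \<longleftrightarrow>
     (\<exists>B :: 'a set. finite B \<and> span B = UNIV) \<and>
     lie_bracket br \<and> two_step_nilpotent br \<and> scalar_product g \<and>
     (let Z = lie_center br; V = orth_compl g Z in
        (\<forall>z\<in>Z. (\<forall>w\<in>Z. g z w = 0) \<longrightarrow> z = 0) \<and>
        (\<forall>x. \<exists>v\<in>V. \<exists>z\<in>Z. x = v + z) \<and>
        (\<exists>J.
           (\<forall>z\<in>Z. \<forall>u\<in>V. J z u \<in> V \<and> (\<forall>v\<in>V. g (J z u) v = g z (br u v))) \<and>
           (\<forall>z\<in>Z. \<forall>u\<in>V. \<forall>v\<in>V. g (J z u) (J z v) = g z z * g u v)))"

definition orthonormal_basis :: "('a::real_vector \<Rightarrow> 'a \<Rightarrow> real) \<Rightarrow> (nat \<Rightarrow> 'a) \<Rightarrow> nat \<Rightarrow> bool" where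
  "orthonormal_basis g b N \<longleftrightarrow>
     inj_on b {..<N} \<and> independent (b ` {..<N}) \<and> span (b ` {..<N}) = UNIV \<and>
     (\<forall>i<N. \<forall>j<N. i \<noteq> j \<longrightarrow> g (b i) (b j) = 0) \<and>
     (\<forall>i<N. g (b i) (b i) = 1 \<or> g (b i) (b i) = -1)"

end

theory Submission
  imports Defs
begin
lemma bil_sum_left:
  assumes "bilinear g"
  shows "g (\<Sum>i\<in>S. f i) y = (\<Sum>i\<in>S. g (f i) y)"
proof -
  interpret l: linear "\<lambda>x. g x y" using assms by (simp add: bilinear_def)
  show ?thesis by (simp add: l.sum)
qed

lemma bil_sum_right:
  assumes "bilinear g"
  shows "g y (\<Sum>i\<in>S. f i) = (\<Sum>i\<in>S. g y (f i))"
proof -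
  interpret l: linear "\<lambda>x. g y x" using assms by (simp add: bilinear_def)
  show ?thesis by (simp add: l.sum)
qed

definition pm :: "real \<Rightarrow> bool" where "pm s \<longleftrightarrow> s = 1 \<or> s = -1"

lemma pm_mult: "pm a \<Longrightarrow> pm b \<Longrightarrow> pm (a*b)" by (auto simp: pm_def)
lemma pm_sq: "pm a \<Longrightarrow> a * a = 1" by (auto simp: pm_def)
lemma pm_neg: "pm a \<Longrightarrow> pm (-a)" by (auto simp: pm_def)
lemma pm_1: "pm 1" and pm_m1: "pm (-1)" by (auto simp: pm_def)
lemma pm_inv:
  fixes x y :: "'a::real_vector"
  shows "pm a \<Longrightarrow> y = a *\<^sub>R x \<Longrightarrow> x = a *\<^sub>R y"
  unfolding pm_def by (elim disjE) simp_all
lemma pm_pow: "pm ((-1)^k)" by (induct k) (auto simp: pm_def)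

primrec Jl :: "(nat \<Rightarrow> 'a \<Rightarrow> 'a) \<Rightarrow> nat list \<Rightarrow> 'a \<Rightarrow> 'a" where
  "Jl J [] u = u"
| "Jl J (k#xs) u = J k (Jl J xs u)"

lemma Jl_append: "Jl J (xs @ ys) u = Jl J xs (Jl J ys u)"
  by (induct xs) auto

fun toggle :: "nat \<Rightarrow> nat list \<Rightarrow> nat list" where
  "toggle k [] = [k]"
| "toggle k (y#ys) = (if k < y then k#y#ys else if k = y then ys else y # toggle k ys)"

lemma toggle_set: "set (toggle k ys) \<subseteq> insert k (set ys)"
  by (induct ys) auto

lemma toggle_sorted: "sorted_wrt (<) ys \<Longrightarrow> sorted_wrt (<) (toggle k ys)"
proof (induct ys)
  case Nil then show ?case by simp
next
  case (Cons y ys)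
  show ?case
  proof (cases "k < y")
    case True then show ?thesis using Cons by auto
  next
    case False
    then show ?thesis using Cons toggle_set[of k ys] by (auto simp: not_less)
  qed
qed

locale cliff =
  fixes g :: "'a::real_vector \<Rightarrow> 'a \<Rightarrow> real" and V :: "'a set" and n :: nat
    and J :: "nat \<Rightarrow> 'a \<Rightarrow> 'a" and eps :: "nat \<Rightarrow> real" and Bs :: "'a set"
  assumes finB: "finite Bs" and spanB: "span Bs = UNIV"
    and bil: "bilinear g" and gsym: "\<And>x y. g x y = g y x"
    and subV: "subspace V"
    and ndV: "\<And>x. x \<in> V \<Longrightarrow> (\<forall>y\<in>V. g x y = 0) \<Longrightarrow> x = 0"
    and Jin: "\<And>k u. k < n \<Longrightarrow> u \<in> V \<Longrightarrow> J k u \<in> V"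
    and Jadd: "\<And>k u w. k < n \<Longrightarrow> u \<in> V \<Longrightarrow> w \<in> V \<Longrightarrow> J k (u + w) = J k u + J k w"
    and Jscale: "\<And>k u c. k < n \<Longrightarrow> u \<in> V \<Longrightarrow> J k (c *\<^sub>R u) = c *\<^sub>R J k u"
    and Jskew: "\<And>k u w. k < n \<Longrightarrow> u \<in> V \<Longrightarrow> w \<in> V \<Longrightarrow> g (J k u) w = - g u (J k w)"
    and Jsq: "\<And>k u. k < n \<Longrightarrow> u \<in> V \<Longrightarrow> J k (J k u) = (- eps k) *\<^sub>R u"
    and epspm: "\<And>k. k < n \<Longrightarrow> pm (eps k)"
    and Janti: "\<And>k l u. k < n \<Longrightarrow> l < n \<Longrightarrow> k \<noteq> l \<Longrightarrow> u \<in> V \<Longrightarrow> J k (J l u) = - J l (J k u)"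
begin

lemma gadd1: "g (x + y) z = g x z + g y z" using bil by (rule bilinear_ladd)
lemma gadd2: "g z (x + y) = g z x + g z y" using bil by (rule bilinear_radd)
lemma gsc1: "g (c *\<^sub>R x) y = c * g x y" using bilinear_lmul[OF bil] by simp
lemma gsc2: "g x (c *\<^sub>R y) = c * g x y" using bilinear_rmul[OF bil] by simp
lemma gneg1: "g (- x) y = - g x y" using bil by (rule bilinear_lneg)
lemma gneg2: "g x (- y) = - g x y" using bil by (rule bilinear_rneg)
lemma gsub1: "g (x - y) z = g x z - g y z" using bil by (rule bilinear_lsub)
lemma gsub2: "g z (x - y) = g z x - g z y" using bil by (rule bilinear_rsub)
lemma g01: "g 0 x = 0" using bil by (rule bilinear_lzero)
lemma g02: "g x 0 = 0" using bil by (rule bilinear_rzero)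
lemmas gsimps = gadd1 gadd2 gsc1 gsc2 gneg1 gneg2 gsub1 gsub2 g01 g02

lemma V0: "0 \<in> V" using subV by (rule subspace_0)
lemma Vadd: "x \<in> V \<Longrightarrow> y \<in> V \<Longrightarrow> x + y \<in> V" using subV by (rule subspace_add)
lemma Vsc: "x \<in> V \<Longrightarrow> c *\<^sub>R x \<in> V" using subV by (rule subspace_scale)
lemma Vneg: "x \<in> V \<Longrightarrow> - x \<in> V" using subV by (rule subspace_neg)
lemma Vdiff: "x \<in> V \<Longrightarrow> y \<in> V \<Longrightarrow> x - y \<in> V" using subV by (rule subspace_diff)

lemma Jneg: "k < n \<Longrightarrow> u \<in> V \<Longrightarrow> J k (- u) = - J k u"
  using Jscale[of k u "-1"] by simp

abbreviation W :: "nat list \<Rightarrow> bool" where "W xs \<equiv> set xs \<subseteq> {..<n}"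

lemma Jl_in: "W xs \<Longrightarrow> u \<in> V \<Longrightarrow> Jl J xs u \<in> V"
  by (induct xs) (auto intro: Jin)

lemma Jl_add: "W xs \<Longrightarrow> u \<in> V \<Longrightarrow> w \<in> V \<Longrightarrow> Jl J xs (u + w) = Jl J xs u + Jl J xs w"
  by (induct xs) (auto simp: Jadd Jl_in)

lemma Jl_scale: "W xs \<Longrightarrow> u \<in> V \<Longrightarrow> Jl J xs (c *\<^sub>R u) = c *\<^sub>R Jl J xs u"
  by (induct xs) (auto simp: Jscale Jl_in)

lemma Jl_neg: "W xs \<Longrightarrow> u \<in> V \<Longrightarrow> Jl J xs (- u) = - Jl J xs u"
  using Jl_scale[of xs u "-1"] by simp

lemma Jl_diff: "W xs \<Longrightarrow> u \<in> V \<Longrightarrow> w \<in> V \<Longrightarrow> Jl J xs (u - w) = Jl J xs u - Jl J xs w"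
  using Jl_add[of xs u "-w"] Jl_neg[of xs w] Vneg by simp

lemma Jl_adj: "W xs \<Longrightarrow> u \<in> V \<Longrightarrow> w \<in> V \<Longrightarrow>
   g (Jl J xs u) w = (-1)^length xs * g u (Jl J (rev xs) w)"
proof (induct xs arbitrary: w)
  case Nil then show ?case by simp
next
  case (Cons k xs)
  have "g (Jl J (k#xs) u) w = - g (Jl J xs u) (J k w)"
    using Cons by (simp add: Jskew Jl_in)
  also have "\<dots> = - ((-1)^length xs * g u (Jl J (rev xs) (J k w)))"
    using Cons by (simp add: Jin)
  also have "\<dots> = (-1)^length (k#xs) * g u (Jl J (rev (k#xs)) w)"
    by (simp add: Jl_append)
  finally show ?case .
qed

lemma Jl_rev_inv: "W xs \<Longrightarrow> \<exists>c. pm c \<and> (\<forall>u\<in>V. Jl J (rev xs) (Jl J xs u) = c *\<^sub>R u)"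
proof (induct xs)
  case Nil then show ?case by (auto intro: pm_1)
next
  case (Cons k xs)
  then obtain c where c: "pm c" "\<forall>u\<in>V. Jl J (rev xs) (Jl J xs u) = c *\<^sub>R u" by auto
  have k: "k < n" using Cons by auto
  have "\<forall>u\<in>V. Jl J (rev (k#xs)) (Jl J (k#xs) u) = (- eps k * c) *\<^sub>R u"
  proof
    fix u assume u: "u \<in> V"
    have "Jl J (rev (k#xs)) (Jl J (k#xs) u) = Jl J (rev xs) (J k (J k (Jl J xs u)))"
      by (simp add: Jl_append)
    also have "\<dots> = Jl J (rev xs) ((- eps k) *\<^sub>R Jl J xs u)"
      using k u Cons by (simp add: Jsq Jl_in)
    also have "\<dots> = (- eps k) *\<^sub>R Jl J (rev xs) (Jl J xs u)"
      using Cons u by (intro Jl_scale Jl_in) auto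
    also have "\<dots> = (- eps k) *\<^sub>R (c *\<^sub>R u)"
      using u c by simp
    finally show "Jl J (rev (k#xs)) (Jl J (k#xs) u) = (- eps k * c) *\<^sub>R u" by simp
  qed
  moreover have "pm (- eps k * c)" using epspm[OF k] c by (auto simp: pm_def)
  ultimately show ?case by blast
qed

lemma J_Jl_comm: "k < n \<Longrightarrow> W xs \<Longrightarrow> \<exists>s. pm s \<and> (\<forall>u\<in>V. J k (Jl J xs u) = s *\<^sub>R Jl J xs (J k u))"
proof (induct xs)
  case Nil then show ?case by (auto intro: pm_1)
next
  case (Cons l xs)
  then obtain s where s: "pm s" "\<forall>u\<in>V. J k (Jl J xs u) = s *\<^sub>R Jl J xs (J k u)" by auto
  have l: "l < n" using Cons by auto
  define t where "t = (if k = l then 1 else -1::real)"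
  have t: "\<forall>y\<in>V. J k (J l y) = t *\<^sub>R J l (J k y)"
    using Janti[OF Cons(2) l] by (auto simp: t_def)
  have "\<forall>u\<in>V. J k (Jl J (l#xs) u) = (t * s) *\<^sub>R Jl J (l#xs) (J k u)"
  proof
    fix u assume u: "u \<in> V"
    have "J k (Jl J (l#xs) u) = t *\<^sub>R J l (J k (Jl J xs u))"
      using t Cons u by (simp add: Jl_in)
    also have "\<dots> = t *\<^sub>R J l (s *\<^sub>R Jl J xs (J k u))" using s u by simp
    also have "\<dots> = (t * s) *\<^sub>R Jl J (l#xs) (J k u)"
      using l Cons u by (simp add: Jscale Jl_in Jin)
    finally show "J k (Jl J (l#xs) u) = (t * s) *\<^sub>R Jl J (l#xs) (J k u)" .
  qed
  moreover have "pm (t * s)" using s by (auto simp: pm_def t_def)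
  ultimately show ?case by blast
qed

lemma Jl_Jl_comm: "W xs \<Longrightarrow> W ys \<Longrightarrow> \<exists>s. pm s \<and> (\<forall>u\<in>V. Jl J xs (Jl J ys u) = s *\<^sub>R Jl J ys (Jl J xs u))"
proof (induct xs)
  case Nil then show ?case by (auto intro: pm_1)
next
  case (Cons k xs)
  then obtain s where s: "pm s" "\<forall>u\<in>V. Jl J xs (Jl J ys u) = s *\<^sub>R Jl J ys (Jl J xs u)" by auto
  have k: "k < n" using Cons by auto
  obtain t where t: "pm t" "\<forall>u\<in>V. J k (Jl J ys u) = t *\<^sub>R Jl J ys (J k u)"
    using J_Jl_comm[OF k Cons(3)] by auto
  have "\<forall>u\<in>V. Jl J (k#xs) (Jl J ys u) = (s * t) *\<^sub>R Jl J ys (Jl J (k#xs) u)"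
  proof
    fix u assume u: "u \<in> V"
    have "Jl J (k#xs) (Jl J ys u) = J k (s *\<^sub>R Jl J ys (Jl J xs u))" using s u by simp
    also have "\<dots> = s *\<^sub>R J k (Jl J ys (Jl J xs u))"
      using k u Cons by (simp add: Jscale Jl_in)
    also have "\<dots> = s *\<^sub>R (t *\<^sub>R Jl J ys (J k (Jl J xs u)))"
      using t u Cons by (simp add: Jl_in)
    finally show "Jl J (k#xs) (Jl J ys u) = (s * t) *\<^sub>R Jl J ys (Jl J (k#xs) u)" by simp
  qed
  moreover have "pm (s * t)" by (rule pm_mult[OF s(1) t(1)])
  ultimately show ?case by blast
qed

lemma Jl_rev: "W xs \<Longrightarrow> \<exists>s. pm s \<and> (\<forall>u\<in>V. Jl J (rev xs) u = s *\<^sub>R Jl J xs u)"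
proof (induct xs)
  case Nil then show ?case by (auto intro: pm_1)
next
  case (Cons k xs)
  then obtain s where s: "pm s" "\<forall>u\<in>V. Jl J (rev xs) u = s *\<^sub>R Jl J xs u" by auto
  have k: "k < n" and xs: "W xs" using Cons by auto
  obtain t where t: "pm t" "\<forall>u\<in>V. J k (Jl J xs u) = t *\<^sub>R Jl J xs (J k u)"
    using J_Jl_comm[OF k xs] by auto
  have "\<forall>u\<in>V. Jl J (rev (k#xs)) u = (s * t) *\<^sub>R Jl J (k#xs) u"
  proof
    fix u assume u: "u \<in> V"
    have "Jl J (rev (k#xs)) u = s *\<^sub>R Jl J xs (J k u)" using s u k by (simp add: Jl_append Jin)
    also have "Jl J xs (J k u) = t *\<^sub>R J k (Jl J xs u)"
      using t u pm_inv[OF t(1)] by blast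
    finally show "Jl J (rev (k#xs)) u = (s * t) *\<^sub>R Jl J (k#xs) u" by simp
  qed
  moreover have "pm (s * t)" by (rule pm_mult[OF s(1) t(1)])
  ultimately show ?case by blast
qed

lemma Jl_symskew: "W xs \<Longrightarrow> \<exists>s. pm s \<and> (\<forall>u\<in>V. \<forall>w\<in>V. g (Jl J xs u) w = s * g u (Jl J xs w))"
proof -
  assume xs: "W xs"
  obtain s where s: "pm s" "\<forall>u\<in>V. Jl J (rev xs) u = s *\<^sub>R Jl J xs u" using Jl_rev[OF xs] by auto
  have "\<forall>u\<in>V. \<forall>w\<in>V. g (Jl J xs u) w = ((-1)^length xs * s) * g u (Jl J xs w)"
    using Jl_adj[OF xs] s by (simp add: gsc2)
  moreover have "pm ((-1)^length xs * s)" by (rule pm_mult[OF pm_pow s(1)])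
  ultimately show ?thesis by blast
qed

lemma Jl_sq: "W xs \<Longrightarrow> \<exists>s. pm s \<and> (\<forall>u\<in>V. Jl J xs (Jl J xs u) = s *\<^sub>R u)"
proof -
  assume xs: "W xs"
  obtain s where s: "pm s" "\<forall>u\<in>V. Jl J (rev xs) u = s *\<^sub>R Jl J xs u" using Jl_rev[OF xs] by auto
  obtain c where c: "pm c" "\<forall>u\<in>V. Jl J (rev xs) (Jl J xs u) = c *\<^sub>R u" using Jl_rev_inv[OF xs] by auto
  have "\<forall>u\<in>V. Jl J xs (Jl J xs u) = (s * c) *\<^sub>R u"
  proof
    fix u assume u: "u \<in> V"
    have "Jl J (rev xs) (Jl J xs u) = s *\<^sub>R Jl J xs (Jl J xs u)" using s u xs Jl_in by blast
    then have "Jl J xs (Jl J xs u) = s *\<^sub>R (c *\<^sub>R u)" using c u pm_inv[OF s(1)] by metis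
    then show "Jl J xs (Jl J xs u) = (s * c) *\<^sub>R u" by simp
  qed
  moreover have "pm (s * c)" by (rule pm_mult[OF s(1) c(1)])
  ultimately show ?thesis by blast
qed

lemma J_toggle: "k < n \<Longrightarrow> sorted_wrt (<) ys \<Longrightarrow> W ys \<Longrightarrow>
   \<exists>s. pm s \<and> (\<forall>u\<in>V. J k (Jl J ys u) = s *\<^sub>R Jl J (toggle k ys) u)"
proof (induct ys)
  case Nil then show ?case by (auto intro: pm_1)
next
  case (Cons y ys)
  have y: "y < n" using Cons by auto
  show ?case
  proof (cases "k < y")
    case True then show ?thesis by (auto intro: pm_1)
  next
    case False
    show ?thesis
    proof (cases "k = y")
      case True
      have "\<forall>u\<in>V. J k (Jl J (y#ys) u) = (- eps k) *\<^sub>R Jl J (toggle k (y#ys)) u"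
        using True Cons by (simp add: Jsq Jl_in)
      then show ?thesis using epspm[OF Cons(2)] pm_neg by blast
    next
      case False2: False
      then obtain s where s: "pm s" "\<forall>u\<in>V. J k (Jl J ys u) = s *\<^sub>R Jl J (toggle k ys) u"
        using Cons by auto
      have "\<forall>u\<in>V. J k (Jl J (y#ys) u) = (-s) *\<^sub>R Jl J (toggle k (y#ys)) u"
      proof
        fix u assume u: "u \<in> V"
        have tin: "Jl J (toggle k ys) u \<in> V"
          using toggle_set[of k ys] Cons u by (intro Jl_in) auto
        have "J k (Jl J (y#ys) u) = - J y (J k (Jl J ys u))"
          using Janti[OF Cons(2) y False2] Cons u by (simp add: Jl_in)
        also have "\<dots> = - J y (s *\<^sub>R Jl J (toggle k ys) u)" using s u by simp
        also have "\<dots> = (-s) *\<^sub>R Jl J (toggle k (y#ys)) u"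
          using y tin False False2 by (simp add: Jscale)
        finally show "J k (Jl J (y#ys) u) = (-s) *\<^sub>R Jl J (toggle k (y#ys)) u" .
      qed
      then show ?thesis using pm_neg[OF s(1)] by blast
    qed
  qed
qed

definition NF :: "nat list set" where "NF = {ys. sorted_wrt (<) ys \<and> W ys}"

lemma finite_NF: "finite NF"
proof -
  have "NF \<subseteq> {xs. set xs \<subseteq> {..<n} \<and> length xs \<le> n}"
  proof
    fix ys assume "ys \<in> NF"
    then have d: "distinct ys" and s: "set ys \<subseteq> {..<n}" by (auto simp: NF_def strict_sorted_iff)
    have "length ys = card (set ys)" using distinct_card[OF d] by simp
    also have "\<dots> \<le> card {..<n}" using s by (intro card_mono) auto
    finally show "ys \<in> {xs. set xs \<subseteq> {..<n} \<and> length xs \<le> n}" using s by simp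
  qed
  then show ?thesis using finite_lists_length_le[of "{..<n}" n] finite_subset by blast
qed

lemma Jl_NF: "W xs \<Longrightarrow> \<exists>ys\<in>NF. \<exists>s. pm s \<and> (\<forall>u\<in>V. Jl J xs u = s *\<^sub>R Jl J ys u)"
proof (induct xs)
  case Nil
  have "[] \<in> NF" by (simp add: NF_def)
  moreover have "\<forall>u\<in>V. Jl J [] u = 1 *\<^sub>R Jl J [] u" by simp
  ultimately show ?case using pm_1 by blast
next
  case (Cons k xs)
  then obtain ys s where ys: "ys \<in> NF" "pm s" "\<forall>u\<in>V. Jl J xs u = s *\<^sub>R Jl J ys u" by auto
  have k: "k < n" using Cons by auto
  have ysn: "sorted_wrt (<) ys" "W ys" using ys(1) by (auto simp: NF_def)
  obtain t where t: "pm t" "\<forall>u\<in>V. J k (Jl J ys u) = t *\<^sub>R Jl J (toggle k ys) u"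
    using J_toggle[OF k ysn] by auto
  have "toggle k ys \<in> NF" using ys(1) toggle_sorted toggle_set[of k ys] k by (auto simp: NF_def)
  moreover have "\<forall>u\<in>V. Jl J (k#xs) u = (s * t) *\<^sub>R Jl J (toggle k ys) u"
  proof
    fix u assume u: "u \<in> V"
    have "Jl J (k#xs) u = J k (s *\<^sub>R Jl J ys u)" using ys u by simp
    also have "\<dots> = s *\<^sub>R J k (Jl J ys u)" using k u ys(1) by (simp add: Jscale Jl_in NF_def)
    finally show "Jl J (k#xs) u = (s * t) *\<^sub>R Jl J (toggle k ys) u" using t u by simp
  qed
  ultimately show ?case using pm_mult[OF ys(2) t(1)] by blast
qed

end

context cliff begin

lemma dim_less:
  fixes E U :: "'a set"
  assumes "subspace E" "subspace U" "E \<subseteq> U" "w \<in> U" "w \<notin> E"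
  shows "real_vector.dim E < real_vector.dim U"
proof -
  obtain B where B: "B \<subseteq> Bs" "independent B" "Bs \<subseteq> span B"
    using real_vector.maximal_independent_subset[of Bs] by blast
  have spB: "span B = UNIV"
    using B(3) spanB by (metis real_vector.span_mono real_vector.span_span top.extremum_unique)
  have fB: "finite B" using B(1) finB finite_subset by blast
  interpret fd: finite_dimensional_vector_space "scaleR :: real \<Rightarrow> 'a \<Rightarrow> 'a" B
    by unfold_locales (use fB B(2) spB in \<open>auto simp: dependent_raw_def span_raw_def\<close>)
  have "span E \<subset> span U"
    using assms real_vector.span_eq_iff by blast
  then show ?thesis using fd.dim_psubset[of E U] by (simp add: dim_raw_def span_raw_def)
qed

lemma exists_nonnull:
  fixes U :: "'a set"
  assumes "subspace U" "\<forall>x\<in>U. (\<forall>y\<in>U. g x y = 0) \<longrightarrow> x = 0" "w \<in> U" "w \<noteq> 0"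
  shows "\<exists>v\<in>U. g v v \<noteq> 0"
proof (rule ccontr)
  assume "\<not> ?thesis"
  then have z: "\<forall>v\<in>U. g v v = 0" by auto
  obtain u where u: "u \<in> U" "g w u \<noteq> 0" using assms by blast
  have "w + u \<in> U" using assms(1,3) u(1) by (rule subspace_add)
  then have "g (w + u) (w + u) = 0" using z by blast
  then have "g w u + g u w = 0" using z assms(3) u(1) by (simp add: gsimps)
  then show False using u(2) gsym[of u w] by simp
qed

definition symw :: "nat list \<Rightarrow> bool" where
  "symw xs \<longleftrightarrow> (\<forall>u\<in>V. \<forall>w\<in>V. g (Jl J xs u) w = g u (Jl J xs w))"

definition goodv :: "'a \<Rightarrow> nat list set \<Rightarrow> bool" where
  "goodv v H \<longleftrightarrow> (\<forall>xs\<in>H. (\<exists>s. pm s \<and> Jl J xs v = s *\<^sub>R v) \<or> g (Jl J xs v) v = 0)"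

lemma Jl_zero: "W xs \<Longrightarrow> Jl J xs 0 = 0"
  using Jl_scale[of xs 0 0] V0 by simp

lemma csqrt_ab: "\<exists>a b::real. a^2 - b^2 = N \<and> 2 * a * b = c"
proof -
  define w where "w = csqrt (Complex N c)"
  have "w^2 = Complex N c" by (simp add: w_def)
  then have "Re (w^2) = N" "Im (w^2) = c" by simp_all
  then show ?thesis by (auto simp: Re_power2 Im_power2)
qed

end

context cliff begin

lemma case1:
  fixes U :: "'a set"
  assumes IH: "\<And>E H'. real_vector.dim E < real_vector.dim U \<Longrightarrow> subspace E \<Longrightarrow> E \<subseteq> V \<Longrightarrow>
       (\<forall>x\<in>E. (\<forall>y\<in>E. g x y = 0) \<longrightarrow> x = 0) \<Longrightarrow> (\<exists>w\<in>E. w \<noteq> 0) \<Longrightarrow>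
       (\<forall>xs\<in>H'. W xs \<and> (\<forall>w\<in>E. Jl J xs w \<in> E)) \<Longrightarrow> (\<forall>xs\<in>H'. \<forall>ys\<in>H'. xs @ ys \<in> H') \<Longrightarrow>
       \<exists>v\<in>E. g v v \<noteq> 0 \<and> goodv v H'"
    and sU: "subspace U" and UV: "U \<subseteq> V"
    and ndU: "\<forall>x\<in>U. (\<forall>y\<in>U. g x y = 0) \<longrightarrow> x = 0"
    and HU: "\<forall>xs\<in>H. W xs \<and> (\<forall>w\<in>U. Jl J xs w \<in> U)"
    and Hc: "\<forall>xs\<in>H. \<forall>ys\<in>H. xs @ ys \<in> H"
    and P: "P \<in> H" "symw P" "\<forall>u\<in>V. Jl J P (Jl J P u) = u"
    and w1: "w1 \<in> U" "Jl J P w1 \<noteq> w1" and w2: "w2 \<in> U" "Jl J P w2 \<noteq> - w2"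
  shows "\<exists>v\<in>U. g v v \<noteq> 0 \<and> goodv v H"
proof -
  have WP: "W P" and PU: "\<forall>w\<in>U. Jl J P w \<in> U" using HU P(1) by auto
  define E where "E = {w\<in>U. Jl J P w = w}"
  define H' where "H' = {ys\<in>H. \<forall>u\<in>V. Jl J ys (Jl J P u) = Jl J P (Jl J ys u)}"
  have EU: "E \<subseteq> U" by (auto simp: E_def)
  have EV: "E \<subseteq> V" using EU UV by auto
  have sE: "subspace E"
    unfolding subspace_def
  proof (intro conjI ballI allI)
    show "0 \<in> E" using sU Jl_zero[OF WP] by (simp add: E_def subspace_0)
  next
    fix x y assume "x \<in> E" "y \<in> E"
    then show "x + y \<in> E" using sU UV Jl_add[OF WP, of x y] by (auto simp: E_def subspace_add subset_iff)
  next
    fix c x assume "x \<in> E"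
    then show "c *\<^sub>R x \<in> E" using sU UV Jl_scale[OF WP, of x c] by (auto simp: E_def subspace_scale subset_iff)
  qed
  have ndE: "\<forall>x\<in>E. (\<forall>y\<in>E. g x y = 0) \<longrightarrow> x = 0"
  proof (intro ballI impI)
    fix x assume x: "x \<in> E" and z: "\<forall>y\<in>E. g x y = 0"
    have xU: "x \<in> U" and xV: "x \<in> V" and Px: "Jl J P x = x" using x EU EV by (auto simp: E_def)
    have "\<forall>w\<in>U. g x w = 0"
    proof
      fix w assume w: "w \<in> U"
      have wV: "w \<in> V" using w UV by auto
      have PwV: "Jl J P w \<in> V" using Jl_in[OF WP wV] .
      have "w + Jl J P w \<in> E"
        using w PU sU P(3) wV PwV by (auto simp: E_def Jl_add[OF WP] subspace_add add.commute)
      then have "g x (w + Jl J P w) = 0" using z by blast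
      moreover have "g x (Jl J P w) = g x w"
        using P(2) xV wV Px unfolding symw_def by metis
      ultimately show "g x w = 0" by (simp add: gsimps)
    qed
    then show "x = 0" using ndU xU by blast
  qed
  have nzE: "\<exists>w\<in>E. w \<noteq> 0"
  proof -
    have w2V: "w2 \<in> V" using w2 UV by auto
    have "w2 + Jl J P w2 \<in> E"
      using w2 PU sU P(3) w2V Jl_in[OF WP w2V] by (auto simp: E_def Jl_add[OF WP] subspace_add add.commute)
    moreover have "w2 + Jl J P w2 \<noteq> 0" using w2(2) by (metis add.commute add_eq_0_iff)
    ultimately show ?thesis by blast
  qed
  have dE: "real_vector.dim E < real_vector.dim U"
    using dim_less[OF sE sU EU w1(1)] w1(2) by (auto simp: E_def)
  have H'1: "\<forall>xs\<in>H'. W xs \<and> (\<forall>w\<in>E. Jl J xs w \<in> E)"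
  proof (intro ballI conjI)
    fix xs assume xs: "xs \<in> H'"
    show "W xs" using xs HU by (auto simp: H'_def)
    fix w assume w: "w \<in> E"
    have "Jl J xs w \<in> U" using xs HU w EU by (auto simp: H'_def)
    moreover have "Jl J P (Jl J xs w) = Jl J xs w"
    proof -
      have "w \<in> V" "Jl J P w = w" using w EV by (auto simp: E_def)
      then show ?thesis using xs by (auto simp: H'_def)
    qed
    ultimately show "Jl J xs w \<in> E" by (simp add: E_def)
  qed
  have H'2: "\<forall>xs\<in>H'. \<forall>ys\<in>H'. xs @ ys \<in> H'"
  proof (intro ballI)
    fix xs ys assume xs: "xs \<in> H'" and ys: "ys \<in> H'"
    have "xs @ ys \<in> H" using xs ys Hc by (auto simp: H'_def)
    moreover have "\<forall>u\<in>V. Jl J (xs @ ys) (Jl J P u) = Jl J P (Jl J (xs @ ys) u)"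
    proof
      fix u assume u: "u \<in> V"
      have yW: "W ys" using ys HU by (auto simp: H'_def)
      have "Jl J (xs @ ys) (Jl J P u) = Jl J xs (Jl J P (Jl J ys u))"
        using ys u by (simp add: Jl_append H'_def)
      also have "\<dots> = Jl J P (Jl J xs (Jl J ys u))"
        using xs Jl_in[OF yW u] by (simp add: H'_def)
      finally show "Jl J (xs @ ys) (Jl J P u) = Jl J P (Jl J (xs @ ys) u)" by (simp add: Jl_append)
    qed
    ultimately show "xs @ ys \<in> H'" by (simp add: H'_def)
  qed
  obtain v where v: "v \<in> E" "g v v \<noteq> 0" "goodv v H'"
    using IH[OF dE sE EV ndE nzE H'1 H'2] by blast
  have vV: "v \<in> V" and vU: "v \<in> U" and Pv: "Jl J P v = v" using v EV EU by (auto simp: E_def)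
  have "goodv v H"
    unfolding goodv_def
  proof
    fix xs assume xs: "xs \<in> H"
    have xW: "W xs" using xs HU by auto
    obtain s where s: "pm s" "\<forall>u\<in>V. Jl J xs (Jl J P u) = s *\<^sub>R Jl J P (Jl J xs u)"
      using Jl_Jl_comm[OF xW WP] by blast
    show "(\<exists>s. pm s \<and> Jl J xs v = s *\<^sub>R v) \<or> g (Jl J xs v) v = 0"
    proof (cases "s = 1")
      case True
      then have "xs \<in> H'" using xs s by (simp add: H'_def)
      then show ?thesis using v(3) by (simp add: goodv_def)
    next
      case False
      then have sm: "s = -1" using s(1) by (simp add: pm_def)
      have xv: "Jl J xs v \<in> V" using Jl_in[OF xW vV] .
      have "Jl J xs v = - Jl J P (Jl J xs v)" using s(2) vV Pv sm by force
      then have PX: "Jl J P (Jl J xs v) = - Jl J xs v" by (metis minus_minus)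
      have "g (Jl J xs v) v = g (Jl J xs v) (Jl J P v)" using Pv by simp
      also have "\<dots> = g (Jl J P (Jl J xs v)) v" using P(2) xv vV unfolding symw_def by metis
      also have "\<dots> = - g (Jl J xs v) v" using PX by (simp add: gsimps)
      finally show ?thesis by simp
    qed
  qed
  then show ?thesis using v vU by blast
qed

end

context cliff begin

lemma kstep:
  fixes U :: "'a set" and v :: 'a
  assumes sU: "subspace U" and UV: "U \<subseteq> V"
    and ys: "W ys" "symw ys" "\<forall>u\<in>V. Jl J ys (Jl J ys u) = - u" "\<forall>w\<in>U. Jl J ys w \<in> U"
    and v: "v \<in> U" "g v v \<noteq> 0"
  shows "\<exists>v'\<in>U. g v' v' \<noteq> 0 \<and> g (Jl J ys v') v' = 0 \<and>
     (\<forall>zs. W zs \<and> (\<forall>u\<in>V. Jl J ys (Jl J zs u) = - Jl J zs (Jl J ys u)) \<and> g (Jl J zs v) v = 0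
        \<longrightarrow> g (Jl J zs v') v' = 0)"
proof -
  define K where "K = Jl J ys"
  define N where "N = g v v"
  define c where "c = g (K v) v"
  obtain a b where ab: "a^2 - b^2 = N" "2 * a * b = c" using csqrt_ab by blast
  have vV: "v \<in> V" using v UV by auto
  have KvV: "K v \<in> V" using Jl_in[OF ys(1) vV] by (simp add: K_def)
  have KKv: "K (K v) = - v" using ys(3) vV by (simp add: K_def)
  have symK: "\<And>u w. u \<in> V \<Longrightarrow> w \<in> V \<Longrightarrow> g (K u) w = g u (K w)"
    using ys(2) by (simp add: symw_def K_def)
  have e1: "g (K v) (K v) = - N" using symK[OF vV KvV] KKv by (simp add: N_def gsimps)
  have e2: "g v (K v) = c" using gsym by (simp add: c_def)
  define v' where "v' = a *\<^sub>R v + b *\<^sub>R K v"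
  have v'U: "v' \<in> U" unfolding v'_def
    using sU v(1) ys(4) by (simp add: K_def subspace_add subspace_scale)
  have Kv': "K v' = a *\<^sub>R K v - b *\<^sub>R v"
    unfolding v'_def K_def using ys(1) vV KvV KKv
    by (simp add: Jl_add Jl_scale Vsc K_def)
  have "g v' v' = (a^2 - b^2) * N + 2 * a * b * c"
    unfolding v'_def by (simp add: gsimps e1 e2 c_def[symmetric] N_def[symmetric] algebra_simps power2_eq_square)
  also have "\<dots> = N^2 + c^2" using ab by (simp add: power2_eq_square)
  finally have nv': "g v' v' \<noteq> 0" using v(2) by (simp add: N_def add_nonneg_eq_0_iff)
  have "g (K v') v' = (a^2 - b^2) * c - 2 * a * b * N"
    unfolding Kv' unfolding v'_def by (simp add: gsimps e1 e2 c_def[symmetric] N_def[symmetric] algebra_simps power2_eq_square)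
  also have "\<dots> = 0" using ab by simp
  finally have q: "g (K v') v' = 0" .
  have rest: "\<forall>zs. W zs \<and> (\<forall>u\<in>V. Jl J ys (Jl J zs u) = - Jl J zs (Jl J ys u)) \<and> g (Jl J zs v) v = 0
        \<longrightarrow> g (Jl J zs v') v' = 0"
  proof (intro allI impI)
    fix zs assume zs: "W zs \<and> (\<forall>u\<in>V. Jl J ys (Jl J zs u) = - Jl J zs (Jl J ys u)) \<and> g (Jl J zs v) v = 0"
    define K' where "K' = Jl J zs"
    have zW: "W zs" using zs by simp
    have anti: "\<And>u. u \<in> V \<Longrightarrow> K (K' u) = - K' (K u)" using zs by (simp add: K_def K'_def)
    have K'vV: "K' v \<in> V" using Jl_in[OF zW vV] by (simp add: K'_def)
    have K'KvV: "K' (K v) \<in> V" using Jl_in[OF zW KvV] by (simp add: K'_def)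
    have f1: "g (K' v) (K v) = - g (K' (K v)) v"
      using symK[OF K'vV vV] anti[OF vV] by (simp add: gsimps)
    have f2: "g (K' (K v)) (K v) = g (K' v) v"
    proof -
      have "g (K' (K v)) (K v) = g (K (K' (K v))) v" using symK[OF K'KvV vV] by simp
      also have "K (K' (K v)) = - K' (K (K v))" using anti[OF KvV] .
      also have "K' (K (K v)) = - K' v" using KKv Jl_neg[OF zW vV] by (simp add: K'_def)
      finally show ?thesis by simp
    qed
    have K'v': "K' v' = a *\<^sub>R K' v + b *\<^sub>R K' (K v)"
      unfolding v'_def K'_def using zW vV KvV by (simp add: Jl_add Jl_scale Vsc K_def)
    have "g (K' v') v' = (a^2 + b^2) * g (K' v) v"
      unfolding K'v' unfolding v'_def by (simp add: gsimps f1 f2 algebra_simps power2_eq_square)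
    then show "g (Jl J zs v') v' = 0" using zs by (simp add: K'_def)
  qed
  show ?thesis using v'U nv' q rest by (auto simp: K_def)
qed

end

context cliff begin

lemma case2:
  fixes U :: "'a set"
  assumes sU: "subspace U" and UV: "U \<subseteq> V"
    and ndU: "\<forall>x\<in>U. (\<forall>y\<in>U. g x y = 0) \<longrightarrow> x = 0"
    and nzU: "\<exists>w\<in>U. w \<noteq> 0"
    and HU: "\<forall>xs\<in>H. W xs \<and> (\<forall>w\<in>U. Jl J xs w \<in> U)"
    and Hc: "\<forall>xs\<in>H. \<forall>ys\<in>H. xs @ ys \<in> H"
    and nc: "\<forall>P\<in>H. symw P \<and> (\<forall>u\<in>V. Jl J P (Jl J P u) = u) \<longrightarrow>
                (\<forall>w\<in>U. Jl J P w = w) \<or> (\<forall>w\<in>U. Jl J P w = - w)"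
  shows "\<exists>v\<in>U. g v v \<noteq> 0 \<and> goodv v H"
proof -
  define Kset where "Kset = {ys\<in>NF. (\<exists>xs\<in>H. \<exists>s. pm s \<and> (\<forall>u\<in>V. Jl J xs u = s *\<^sub>R Jl J ys u))
      \<and> symw ys \<and> (\<forall>u\<in>V. Jl J ys (Jl J ys u) = - u)}"
  have fK: "finite Kset" using finite_NF by (rule finite_subset[rotated]) (auto simp: Kset_def)
  have KW: "\<And>ys. ys \<in> Kset \<Longrightarrow> W ys" by (auto simp: Kset_def NF_def)
  have KU: "\<And>ys w. ys \<in> Kset \<Longrightarrow> w \<in> U \<Longrightarrow> Jl J ys w \<in> U"
  proof -
    fix ys w assume ys: "ys \<in> Kset" and w: "w \<in> U"
    obtain xs s where xs: "xs \<in> H" "pm s" "\<forall>u\<in>V. Jl J xs u = s *\<^sub>R Jl J ys u"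
      using ys by (auto simp: Kset_def)
    have "Jl J ys w = s *\<^sub>R Jl J xs w" using xs w UV pm_inv[OF xs(2)] by blast
    then show "Jl J ys w \<in> U" using HU xs(1) w sU by (simp add: subspace_scale)
  qed
  have main: "\<And>F. finite F \<Longrightarrow> F \<subseteq> Kset \<Longrightarrow> \<exists>v\<in>U. g v v \<noteq> 0 \<and> (\<forall>ys\<in>F. g (Jl J ys v) v = 0)"
  proof -
    fix F :: "nat list set"
    assume "finite F" "F \<subseteq> Kset"
    then show "\<exists>v\<in>U. g v v \<noteq> 0 \<and> (\<forall>ys\<in>F. g (Jl J ys v) v = 0)"
    proof (induct F rule: finite_induct)
      case empty
      then show ?case using exists_nonnull[OF sU ndU] nzU by auto
    next
      case (insert y0 F)
      then obtain v where v: "v \<in> U" "g v v \<noteq> 0" "\<forall>ys\<in>F. g (Jl J ys v) v = 0" by auto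
      have y0: "y0 \<in> Kset" using insert by auto
      have y0W: "W y0" using KW[OF y0] .
      obtain v' where v': "v' \<in> U" "g v' v' \<noteq> 0" "g (Jl J y0 v') v' = 0"
        "\<forall>zs. W zs \<and> (\<forall>u\<in>V. Jl J y0 (Jl J zs u) = - Jl J zs (Jl J y0 u)) \<and> g (Jl J zs v) v = 0
          \<longrightarrow> g (Jl J zs v') v' = 0"
        using kstep[OF sU UV y0W _ _ _ v(1,2)] y0 KU by (auto simp: Kset_def)
      have "\<forall>ys\<in>insert y0 F. g (Jl J ys v') v' = 0"
      proof
        fix y1 assume y1: "y1 \<in> insert y0 F"
        show "g (Jl J y1 v') v' = 0"
        proof (cases "y1 = y0")
          case True then show ?thesis using v' by simp
        next
          case False
          then have y1F: "y1 \<in> F" and y1K: "y1 \<in> Kset" using y1 insert by auto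
          have y1W: "W y1" using KW[OF y1K] .
          obtain t where t: "pm t" "\<forall>u\<in>V. Jl J y0 (Jl J y1 u) = t *\<^sub>R Jl J y1 (Jl J y0 u)"
            using Jl_Jl_comm[OF y0W y1W] by blast
          show ?thesis
          proof (cases "t = 1")
            case False
            then have "t = -1" using t(1) by (simp add: pm_def)
            then have "\<forall>u\<in>V. Jl J y0 (Jl J y1 u) = - Jl J y1 (Jl J y0 u)" using t by simp
            then show ?thesis using v'(4) y1W v(3) y1F by blast
          next
            case True
            define K where "K = Jl J y0"
            define K' where "K' = Jl J y1"
            have comm: "\<And>u. u \<in> V \<Longrightarrow> K (K' u) = K' (K u)" using t True by (simp add: K_def K'_def)
            obtain xs0 s0 where x0: "xs0 \<in> H" "pm s0" "\<forall>u\<in>V. Jl J xs0 u = s0 *\<^sub>R K u"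
              using y0 by (auto simp: Kset_def K_def)
            obtain xs1 s1 where x1: "xs1 \<in> H" "pm s1" "\<forall>u\<in>V. Jl J xs1 u = s1 *\<^sub>R K' u"
              using y1K by (auto simp: Kset_def K'_def)
            have KV: "\<And>u. u \<in> V \<Longrightarrow> K u \<in> V" using Jl_in[OF y0W] by (simp add: K_def)
            have K'V: "\<And>u. u \<in> V \<Longrightarrow> K' u \<in> V" using Jl_in[OF y1W] by (simp add: K'_def)
            have Ksc: "\<And>u c. u \<in> V \<Longrightarrow> K (c *\<^sub>R u) = c *\<^sub>R K u" using Jl_scale[OF y0W] by (simp add: K_def)
            have K'sc: "\<And>u c. u \<in> V \<Longrightarrow> K' (c *\<^sub>R u) = c *\<^sub>R K' u" using Jl_scale[OF y1W] by (simp add: K'_def)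
            have KK: "\<And>u. u \<in> V \<Longrightarrow> K (K u) = - u" using y0 by (simp add: Kset_def K_def)
            have K'K': "\<And>u. u \<in> V \<Longrightarrow> K' (K' u) = - u" using y1K by (simp add: Kset_def K'_def)
            have sK: "\<And>u w. u \<in> V \<Longrightarrow> w \<in> V \<Longrightarrow> g (K u) w = g u (K w)"
              using y0 by (simp add: Kset_def K_def symw_def)
            have sK': "\<And>u w. u \<in> V \<Longrightarrow> w \<in> V \<Longrightarrow> g (K' u) w = g u (K' w)"
              using y1K by (simp add: Kset_def K'_def symw_def)
            define P where "P = xs0 @ xs1"
            have PH: "P \<in> H" using Hc x0 x1 by (simp add: P_def)
            have Pe: "\<And>u. u \<in> V \<Longrightarrow> Jl J P u = (s0 * s1) *\<^sub>R K (K' u)"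
            proof -
              fix u assume u: "u \<in> V"
              have "Jl J P u = Jl J xs0 (Jl J xs1 u)" by (simp add: P_def Jl_append)
              also have "\<dots> = s0 *\<^sub>R K (s1 *\<^sub>R K' u)"
                using x0 x1 u HU Jl_in by (simp add: K'V Vsc)
              also have "\<dots> = (s0 * s1) *\<^sub>R K (K' u)" using Ksc K'V u by simp
              finally show "Jl J P u = (s0 * s1) *\<^sub>R K (K' u)" .
            qed
            have symP: "symw P" unfolding symw_def
            proof (intro ballI)
              fix u w assume u: "u \<in> V" and w: "w \<in> V"
              have "g (Jl J P u) w = (s0 * s1) * g (K (K' u)) w" using Pe u by (simp add: gsimps)
              also have "g (K (K' u)) w = g u (K (K' w))"
                using sK[OF K'V[OF u] w] sK'[OF u KV[OF w]] comm[OF w] by simp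
              finally show "g (Jl J P u) w = g u (Jl J P w)" using Pe w by (simp add: gsimps)
            qed
            have invP: "\<forall>u\<in>V. Jl J P (Jl J P u) = u"
            proof
              fix u assume u: "u \<in> V"
              have KK'u: "K (K' u) \<in> V" using KV K'V u by blast
              have "Jl J P (Jl J P u) = (s0 * s1) *\<^sub>R K (K' ((s0 * s1) *\<^sub>R K (K' u)))"
                using Pe u KK'u Vsc by simp
              also have "\<dots> = ((s0 * s1) * (s0 * s1)) *\<^sub>R K (K' (K (K' u)))"
                using K'sc Ksc KK'u K'V by simp
              also have "(s0 * s1) * (s0 * s1) = 1" using pm_sq[OF pm_mult[OF x0(2) x1(2)]] .
              also have "K' (K (K' u)) = K (K' (K' u))" using comm[OF K'V[OF u]] by simp
              also have "K' (K' u) = - u" using K'K' u by simp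
              also have "K (K (- u)) = u" using KK[OF Vneg[OF u]] by simp
              finally show "Jl J P (Jl J P u) = u" by simp
            qed
            obtain \<sigma> where sig: "pm \<sigma>" "\<forall>w\<in>U. Jl J P w = \<sigma> *\<^sub>R w"
              using nc PH symP invP unfolding pm_def
              by (metis scaleR_minus1_left scaleR_one)
            define \<tau> where "\<tau> = s0 * s1 * \<sigma>"
            have K'e: "\<And>w. w \<in> U \<Longrightarrow> K' w = (- \<tau>) *\<^sub>R K w"
            proof -
              fix w assume w: "w \<in> U"
              have wV: "w \<in> V" using w UV by auto
              have "(s0 * s1) *\<^sub>R K (K' w) = \<sigma> *\<^sub>R w" using Pe[OF wV] sig w by simp
              then have "K (K' w) = (s0 * s1) *\<^sub>R (\<sigma> *\<^sub>R w)"
                using pm_inv[OF pm_mult[OF x0(2) x1(2)]] by metis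
              then have "K (K' w) = \<tau> *\<^sub>R w" by (simp add: \<tau>_def)
              then have "K (K (K' w)) = \<tau> *\<^sub>R K w" using Ksc wV by simp
              then have "- K' w = \<tau> *\<^sub>R K w" using KK[OF K'V[OF wV]] by simp
              then show "K' w = (- \<tau>) *\<^sub>R K w" by (metis minus_minus scaleR_minus_left)
            qed
            have "g (K' v') v' = - \<tau> * g (K v') v'" using K'e[OF v'(1)] by (simp add: gsimps)
            then show ?thesis using v'(3) by (simp add: K_def K'_def)
          qed
        qed
      qed
      then show ?case using v' by blast
    qed
  qed
  obtain v where v: "v \<in> U" "g v v \<noteq> 0" "\<forall>ys\<in>Kset. g (Jl J ys v) v = 0"
    using main[OF fK] by blast
  have vV: "v \<in> V" using v UV by auto
  have "goodv v H" unfolding goodv_def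
  proof
    fix xs assume xs: "xs \<in> H"
    have xW: "W xs" using HU xs by auto
    obtain ys s where ys: "ys \<in> NF" "pm s" "\<forall>u\<in>V. Jl J xs u = s *\<^sub>R Jl J ys u"
      using Jl_NF[OF xW] by blast
    have yW: "W ys" using ys(1) by (simp add: NF_def)
    obtain t where t: "pm t" "\<forall>u\<in>V. \<forall>w\<in>V. g (Jl J ys u) w = t * g u (Jl J ys w)"
      using Jl_symskew[OF yW] by blast
    obtain r where r: "pm r" "\<forall>u\<in>V. Jl J ys (Jl J ys u) = r *\<^sub>R u"
      using Jl_sq[OF yW] by blast
    have yv: "Jl J ys v \<in> V" using Jl_in[OF yW vV] .
    show "(\<exists>s. pm s \<and> Jl J xs v = s *\<^sub>R v) \<or> g (Jl J xs v) v = 0"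
    proof (cases "t = 1")
      case False
      then have "t = -1" using t(1) by (simp add: pm_def)
      then have "g (Jl J ys v) v = - g v (Jl J ys v)" using t vV by simp
      then have "g (Jl J ys v) v = 0" using gsym[of v "Jl J ys v"] by simp
      then show ?thesis using ys(3) vV by (simp add: gsimps)
    next
      case t1: True
      have symy: "symw ys" using t t1 by (simp add: symw_def)
      show ?thesis
      proof (cases "r = 1")
        case False
        then have "r = -1" using r(1) by (simp add: pm_def)
        then have "ys \<in> Kset" using ys xs symy r by (auto simp: Kset_def)
        then have "g (Jl J ys v) v = 0" using v by blast
        then show ?thesis using ys(3) vV by (simp add: gsimps)
      next
        case True
        have symx: "symw xs" unfolding symw_def
        proof (intro ballI)
          fix u w assume u: "u \<in> V" and w: "w \<in> V"
          show "g (Jl J xs u) w = g u (Jl J xs w)"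
            using ys(3) u w symy unfolding symw_def by (simp add: gsimps)
        qed
        have invx: "\<forall>u\<in>V. Jl J xs (Jl J xs u) = u"
        proof
          fix u assume u: "u \<in> V"
          have "Jl J xs (Jl J xs u) = s *\<^sub>R Jl J ys (s *\<^sub>R Jl J ys u)"
            using ys(3) u Jl_in[OF xW u] by simp
          also have "\<dots> = (s * s) *\<^sub>R Jl J ys (Jl J ys u)" using Jl_scale[OF yW] Jl_in[OF yW u] by simp
          also have "\<dots> = u" using pm_sq[OF ys(2)] r True u by simp
          finally show "Jl J xs (Jl J xs u) = u" .
        qed
        have "(\<forall>w\<in>U. Jl J xs w = w) \<or> (\<forall>w\<in>U. Jl J xs w = - w)" using nc xs symx invx by blast
        then have "Jl J xs v = 1 *\<^sub>R v \<or> Jl J xs v = (-1) *\<^sub>R v" using v(1) by auto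
        then show ?thesis using pm_1 pm_m1 by blast
      qed
    qed
  qed
  then show ?thesis using v by blast
qed

lemma claim:
  fixes U :: "'a set"
  shows "real_vector.dim U = d \<Longrightarrow> subspace U \<Longrightarrow> U \<subseteq> V \<Longrightarrow>
    (\<forall>x\<in>U. (\<forall>y\<in>U. g x y = 0) \<longrightarrow> x = 0) \<Longrightarrow> (\<exists>w\<in>U. w \<noteq> 0) \<Longrightarrow>
    (\<forall>xs\<in>H. W xs \<and> (\<forall>w\<in>U. Jl J xs w \<in> U)) \<Longrightarrow> (\<forall>xs\<in>H. \<forall>ys\<in>H. xs @ ys \<in> H) \<Longrightarrow>
    \<exists>v\<in>U. g v v \<noteq> 0 \<and> goodv v H"
proof (induct d arbitrary: U H rule: less_induct)
  case (less d U H)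
  show ?case
  proof (cases "\<exists>P\<in>H. symw P \<and> (\<forall>u\<in>V. Jl J P (Jl J P u) = u) \<and>
      \<not> (\<forall>w\<in>U. Jl J P w = w) \<and> \<not> (\<forall>w\<in>U. Jl J P w = - w)")
    case True
    then obtain P w1 w2 where P: "P \<in> H" "symw P" "\<forall>u\<in>V. Jl J P (Jl J P u) = u"
      and w: "w1 \<in> U" "Jl J P w1 \<noteq> w1" "w2 \<in> U" "Jl J P w2 \<noteq> - w2" by blast
    show ?thesis
    proof (rule case1[OF _ less(3,4,5,7,8) P w])
      fix E :: "'a set" and H'
      assume "real_vector.dim E < real_vector.dim U"
      then show "subspace E \<Longrightarrow> E \<subseteq> V \<Longrightarrow>
       (\<forall>x\<in>E. (\<forall>y\<in>E. g x y = 0) \<longrightarrow> x = 0) \<Longrightarrow> (\<exists>w\<in>E. w \<noteq> 0) \<Longrightarrow>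
       (\<forall>xs\<in>H'. W xs \<and> (\<forall>w\<in>E. Jl J xs w \<in> E)) \<Longrightarrow> (\<forall>xs\<in>H'. \<forall>ys\<in>H'. xs @ ys \<in> H') \<Longrightarrow>
       \<exists>v\<in>E. g v v \<noteq> 0 \<and> goodv v H'"
        using less(1)[of "real_vector.dim E" E H'] less(2) by blast
    qed
  next
    case False
    then show ?thesis using case2[OF less(3,4,5,6,7,8)] by blast
  qed
qed

end

context cliff begin

definition orthon :: "'a set \<Rightarrow> bool" where
  "orthon T \<longleftrightarrow> (\<forall>t\<in>T. g t t = 1 \<or> g t t = -1) \<and> (\<forall>s\<in>T. \<forall>t\<in>T. s \<noteq> t \<longrightarrow> g s t = 0)"

lemma orthon_sum:
  assumes "finite T" "orthon T" "t' \<in> T"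
  shows "g (\<Sum>t\<in>T. c t *\<^sub>R t) t' = c t' * g t' t'"
proof -
  have "g (\<Sum>t\<in>T. c t *\<^sub>R t) t' = (\<Sum>t\<in>T. c t * g t t')"
    by (simp add: bil_sum_left[OF bil] gsimps)
  also have "\<dots> = c t' * g t' t' + (\<Sum>t\<in>T - {t'}. c t * g t t')"
    using assms by (simp add: sum.remove)
  also have "(\<Sum>t\<in>T - {t'}. c t * g t t') = 0"
    using assms(2,3) by (intro sum.neutral) (auto simp: orthon_def)
  finally show ?thesis by simp
qed

lemma orthon_indep:
  fixes T :: "'a set"
  assumes "orthon T"
  shows "independent T"
  unfolding real_vector.independent_explicit_finite_subsets
proof (intro allI impI ballI)
  fix S u v assume S: "S \<subseteq> T" "finite S" and su: "(\<Sum>v\<in>S. u v *\<^sub>R v) = 0" and v: "v \<in> S"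
  have oS: "orthon S" using assms S(1) by (auto simp: orthon_def)
  have "u v * g v v = 0" using orthon_sum[OF S(2) oS v, of u] su by (simp add: g01)
  moreover have "g v v \<noteq> 0" using oS v by (auto simp: orthon_def)
  ultimately show "u v = 0" by simp
qed

lemma orthon_finite:
  fixes T :: "'a set"
  assumes "orthon T"
  shows "finite T \<and> card T \<le> card Bs"
  using real_vector.independent_span_bound[OF finB orthon_indep[OF assms]] spanB by auto

definition closedJ :: "'a set \<Rightarrow> bool" where
  "closedJ T \<longleftrightarrow> (\<forall>k<n. \<forall>t\<in>T. \<exists>t'\<in>T. J k t = t' \<or> J k t = - t')"

definition rep :: "'a set \<Rightarrow> 'a" where "rep S = (SOME p. p \<in> S)"

lemma extend:
  fixes T0 :: "'a set"
  assumes T0: "T0 \<subseteq> V" "orthon T0" "closedJ T0" and x: "x \<in> V" "x \<notin> span T0"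
  shows "\<exists>T2. T2 \<subseteq> V \<and> orthon (T0 \<union> T2) \<and> closedJ (T0 \<union> T2) \<and> card T0 < card (T0 \<union> T2)"
proof -
  have fT0: "finite T0" using orthon_finite[OF T0(2)] by simp
  define pr where "pr = (\<lambda>u. u - (\<Sum>t\<in>T0. (g u t / g t t) *\<^sub>R t))"
  have spV: "span T0 \<subseteq> V" using T0(1) subV by (rule real_vector.span_minimal)
  have sumsp: "\<And>u. (\<Sum>t\<in>T0. (g u t / g t t) *\<^sub>R t) \<in> span T0"
    by (intro real_vector.span_sum real_vector.span_scale real_vector.span_base)
  have prV: "\<And>u. u \<in> V \<Longrightarrow> pr u \<in> V" using sumsp spV by (auto simp: pr_def intro: Vdiff)
  have prO: "\<And>u t'. t' \<in> T0 \<Longrightarrow> g (pr u) t' = 0"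
  proof -
    fix u t' assume t': "t' \<in> T0"
    have "g t' t' \<noteq> 0" using T0(2) t' by (auto simp: orthon_def)
    then show "g (pr u) t' = 0"
      unfolding pr_def gsub1 using orthon_sum[OF fT0 T0(2) t', of "\<lambda>t. g u t / g t t"] by simp
  qed
  define Ws where "Ws = {w\<in>V. \<forall>t\<in>T0. g w t = 0}"
  have WsV: "Ws \<subseteq> V" by (auto simp: Ws_def)
  have sWs: "subspace Ws" unfolding subspace_def Ws_def
    by (auto simp: gsimps V0 intro: Vadd Vsc)
  have ndWs: "\<forall>x\<in>Ws. (\<forall>y\<in>Ws. g x y = 0) \<longrightarrow> x = 0"
  proof (intro ballI impI)
    fix w assume w: "w \<in> Ws" and z: "\<forall>y\<in>Ws. g w y = 0"
    have "\<forall>u\<in>V. g w u = 0"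
    proof
      fix u assume u: "u \<in> V"
      have "pr u \<in> Ws" using prV[OF u] prO by (auto simp: Ws_def gsym)
      then have "g w (pr u) = 0" using z by blast
      moreover have "g w (\<Sum>t\<in>T0. (g u t / g t t) *\<^sub>R t) = 0"
        using w by (simp add: bil_sum_right[OF bil] gsimps Ws_def gsym)
      ultimately show "g w u = 0" by (simp add: pr_def gsimps)
    qed
    then show "w = 0" using ndV w by (auto simp: Ws_def)
  qed
  have nzWs: "\<exists>w\<in>Ws. w \<noteq> 0"
  proof
    show "pr x \<in> Ws" using prV[OF x(1)] prO by (auto simp: Ws_def)
    show "pr x \<noteq> 0"
    proof
      assume "pr x = 0"
      then have "x = (\<Sum>t\<in>T0. (g x t / g t t) *\<^sub>R t)" by (simp add: pr_def)
      then show False using x(2) sumsp by metis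
    qed
  qed
  define H where "H = {xs. W xs}"
  have JWs: "\<And>k w. k < n \<Longrightarrow> w \<in> Ws \<Longrightarrow> J k w \<in> Ws"
  proof -
    fix k w assume k: "k < n" and w: "w \<in> Ws"
    have wV: "w \<in> V" using w WsV by auto
    have "\<forall>t\<in>T0. g (J k w) t = 0"
    proof
      fix t assume t: "t \<in> T0"
      obtain t' where t': "t' \<in> T0" "J k t = t' \<or> J k t = - t'" using T0(3) k t by (auto simp: closedJ_def)
      have "g (J k w) t = - g w (J k t)" using Jskew[OF k wV] t T0(1) by auto
      then show "g (J k w) t = 0" using t' w by (auto simp: Ws_def gsimps)
    qed
    then show "J k w \<in> Ws" using Jin[OF k wV] by (simp add: Ws_def)
  qed
  have HU: "\<forall>xs\<in>H. W xs \<and> (\<forall>w\<in>Ws. Jl J xs w \<in> Ws)"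
  proof
    fix xs assume "xs \<in> H"
    then have xW: "W xs" by (simp add: H_def)
    have "\<forall>w\<in>Ws. Jl J xs w \<in> Ws" using xW by (induct xs) (auto intro: JWs)
    then show "W xs \<and> (\<forall>w\<in>Ws. Jl J xs w \<in> Ws)" using xW by simp
  qed
  have Hc: "\<forall>xs\<in>H. \<forall>ys\<in>H. xs @ ys \<in> H" by (auto simp: H_def)
  obtain v0 where v0: "v0 \<in> Ws" "g v0 v0 \<noteq> 0" "goodv v0 H"
    using claim[OF refl sWs WsV ndWs nzWs HU Hc] by blast
  define v where "v = (1 / sqrt \<bar>g v0 v0\<bar>) *\<^sub>R v0"
  have vWs: "v \<in> Ws" using v0(1) sWs by (simp add: v_def subspace_scale)
  have vV: "v \<in> V" using vWs WsV by auto
  have v0V: "v0 \<in> V" using v0(1) WsV by auto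
  have "g v v = g v0 v0 / \<bar>g v0 v0\<bar>"
    by (simp add: v_def gsimps power2_eq_square[symmetric])
  then have pmv: "pm (g v v)" using v0(2) by (auto simp: pm_def abs_if)
  have goodv1: "goodv v H" unfolding goodv_def
  proof
    fix xs assume xs: "xs \<in> H"
    have xW: "W xs" using xs by (simp add: H_def)
    have e: "Jl J xs v = (1 / sqrt \<bar>g v0 v0\<bar>) *\<^sub>R Jl J xs v0" using Jl_scale[OF xW v0V] by (simp add: v_def)
    from v0(3) xs have "(\<exists>s. pm s \<and> Jl J xs v0 = s *\<^sub>R v0) \<or> g (Jl J xs v0) v0 = 0"
      by (simp add: goodv_def)
    then show "(\<exists>s. pm s \<and> Jl J xs v = s *\<^sub>R v) \<or> g (Jl J xs v) v = 0"
    proof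
      assume "\<exists>s. pm s \<and> Jl J xs v0 = s *\<^sub>R v0"
      then obtain s where "pm s" "Jl J xs v0 = s *\<^sub>R v0" by blast
      then have "pm s \<and> Jl J xs v = s *\<^sub>R v" using e by (simp add: v_def)
      then show ?thesis by blast
    next
      assume "g (Jl J xs v0) v0 = 0"
      then show ?thesis using e by (simp add: v_def gsimps)
    qed
  qed
  define Ob where "Ob = (\<lambda>xs. Jl J xs v) ` H"
  have OWs: "Ob \<subseteq> Ws" using HU vWs by (auto simp: Ob_def)
  have OV: "Ob \<subseteq> V" using OWs WsV by auto
  have Onorm: "\<And>q. q \<in> Ob \<Longrightarrow> pm (g q q)"
  proof -
    fix q assume "q \<in> Ob"
    then obtain xs where xs: "W xs" "q = Jl J xs v" by (auto simp: Ob_def H_def)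
    obtain c where c: "pm c" "\<forall>u\<in>V. Jl J (rev xs) (Jl J xs u) = c *\<^sub>R u" using Jl_rev_inv[OF xs(1)] by blast
    have "g q q = (-1)^length xs * g v (Jl J (rev xs) (Jl J xs v))"
      using Jl_adj[OF xs(1) vV Jl_in[OF xs(1) vV]] xs(2) by simp
    also have "\<dots> = ((-1)^length xs * c) * g v v" using c vV by (simp add: gsimps)
    finally show "pm (g q q)" using pm_mult[OF pm_mult[OF pm_pow c(1)] pmv] by simp
  qed
  have Orel: "\<And>q1 q2. q1 \<in> Ob \<Longrightarrow> q2 \<in> Ob \<Longrightarrow> q2 = q1 \<or> q2 = - q1 \<or> g q1 q2 = 0"
  proof -
    fix q1 q2 assume "q1 \<in> Ob" "q2 \<in> Ob"
    then obtain xs ys where xs: "W xs" "q1 = Jl J xs v" and ys: "W ys" "q2 = Jl J ys v"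
      by (auto simp: Ob_def H_def)
    have AH: "rev xs @ ys \<in> H" using xs ys by (auto simp: H_def)
    have o2V: "q2 \<in> V" using ys Jl_in vV by simp
    have rW: "W (rev xs)" using xs by simp
    from goodv1 AH have "(\<exists>s. pm s \<and> Jl J (rev xs @ ys) v = s *\<^sub>R v) \<or> g (Jl J (rev xs @ ys) v) v = 0"
      by (simp add: goodv_def)
    then show "q2 = q1 \<or> q2 = - q1 \<or> g q1 q2 = 0"
    proof
      assume "\<exists>s. pm s \<and> Jl J (rev xs @ ys) v = s *\<^sub>R v"
      then obtain s where s: "pm s" "Jl J (rev xs) q2 = s *\<^sub>R v" using ys by (auto simp: Jl_append)
      obtain c where c: "pm c" "\<forall>u\<in>V. Jl J (rev (rev xs)) (Jl J (rev xs) u) = c *\<^sub>R u"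
        using Jl_rev_inv[OF rW] by blast
      have "c *\<^sub>R q2 = Jl J xs (Jl J (rev xs) q2)" using c o2V by simp
      also have "\<dots> = Jl J xs (s *\<^sub>R v)" using s by simp
      also have "\<dots> = s *\<^sub>R q1" using Jl_scale[OF xs(1) vV] xs by simp
      finally have "q2 = c *\<^sub>R (s *\<^sub>R q1)" using pm_inv[OF c(1)] by metis
      then have "q2 = (c * s) *\<^sub>R q1" by simp
      then show ?thesis using pm_mult[OF c(1) s(1)] by (auto simp: pm_def)
    next
      assume z: "g (Jl J (rev xs @ ys) v) v = 0"
      have "g q1 q2 = (-1)^length xs * g v (Jl J (rev xs) q2)"
        using Jl_adj[OF xs(1) vV o2V] xs by simp
      also have "g v (Jl J (rev xs) q2) = 0" using z ys gsym by (simp add: Jl_append)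
      finally show ?thesis by simp
    qed
  qed
  have OJ: "\<And>k q. k < n \<Longrightarrow> q \<in> Ob \<Longrightarrow> J k q \<in> Ob"
  proof -
    fix k q assume k: "k < n" and "q \<in> Ob"
    then obtain xs where "W xs" "q = Jl J xs v" by (auto simp: Ob_def H_def)
    then have "J k q = Jl J (k#xs) v" "k#xs \<in> H" using k by (auto simp: H_def)
    then show "J k q \<in> Ob" unfolding Ob_def by (metis Jl.simps(2) image_eqI)
  qed
  have repS: "\<And>q. rep {q, - q} = q \<or> rep {q, - q} = - q"
    unfolding rep_def by (metis (mono_tags) insertCI insertE singletonD someI)
  define T2 where "T2 = (\<lambda>q. rep {q, - q}) ` Ob"
  have T2O: "\<And>p. p \<in> T2 \<Longrightarrow> \<exists>q\<in>Ob. p = rep {q, - q}" by (auto simp: T2_def)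
  have T2V: "T2 \<subseteq> V"
  proof
    fix p assume "p \<in> T2"
    then obtain q where q: "q \<in> Ob" "p = rep {q, - q}" using T2O by blast
    then show "p \<in> V" using repS[of q] OV Vneg by auto
  qed
  have T2Ws: "T2 \<subseteq> Ws"
  proof
    fix p assume "p \<in> T2"
    then obtain q where q: "q \<in> Ob" "p = rep {q, - q}" using T2O by blast
    then show "p \<in> Ws" using repS[of q] OWs sWs subspace_neg by fastforce
  qed
  have oT2: "orthon T2" unfolding orthon_def
  proof (intro conjI ballI impI)
    fix p assume "p \<in> T2"
    then obtain q where q: "q \<in> Ob" "p = rep {q, - q}" using T2O by blast
    have "g p p = g q q" using repS[of q] q(2) by (auto simp: gsimps)
    then show "g p p = 1 \<or> g p p = -1" using Onorm[OF q(1)] by (simp add: pm_def)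
  next
    fix p1 p2 assume p1: "p1 \<in> T2" and p2: "p2 \<in> T2" and ne: "p1 \<noteq> p2"
    obtain q1 where q1: "q1 \<in> Ob" "p1 = rep {q1, - q1}" using T2O p1 by blast
    obtain q2 where q2: "q2 \<in> Ob" "p2 = rep {q2, - q2}" using T2O p2 by blast
    have "{q1, - q1} \<noteq> {q2, - q2}" using ne q1 q2 by auto
    then have "q2 \<noteq> q1 \<and> q2 \<noteq> - q1" by auto
    then have "g q1 q2 = 0" using Orel[OF q1(1) q2(1)] by blast
    then show "g p1 p2 = 0" using repS[of q1] repS[of q2] q1(2) q2(2) by (auto simp: gsimps)
  qed
  have cT2: "closedJ T2" unfolding closedJ_def
  proof (intro allI impI ballI)
    fix k p assume k: "k < n" and p: "p \<in> T2"
    obtain q where q: "q \<in> Ob" "p = rep {q, - q}" using T2O p by blast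
    have oV: "q \<in> V" using q OV by auto
    have Jp: "J k p = J k q \<or> J k p = - J k q" using repS[of q] q(2) Jneg[OF k oV] by auto
    define q' where "q' = J k q"
    have q'Ob: "q' \<in> Ob" using OJ[OF k q(1)] by (simp add: q'_def)
    define p' where "p' = rep {q', - q'}"
    have p'T: "p' \<in> T2" using q'Ob by (auto simp: T2_def p'_def)
    have "q' = p' \<or> q' = - p'" using repS[of q'] by (auto simp: p'_def)
    then have "J k p = p' \<or> J k p = - p'" using Jp by (auto simp: q'_def)
    then show "\<exists>t'\<in>T2. J k p = t' \<or> J k p = - t'" using p'T by blast
  qed
  have disj: "T0 \<inter> T2 = {}"
  proof (rule ccontr)
    assume "T0 \<inter> T2 \<noteq> {}"
    then obtain t where t: "t \<in> T0" "t \<in> T2" by blast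
    then have "g t t = 0" using T2Ws by (auto simp: Ws_def)
    then show False using T0(2) t(1) by (auto simp: orthon_def)
  qed
  have ou: "orthon (T0 \<union> T2)" unfolding orthon_def
  proof (intro conjI ballI impI)
    fix t assume "t \<in> T0 \<union> T2"
    then show "g t t = 1 \<or> g t t = -1" using T0(2) oT2 by (auto simp: orthon_def)
  next
    fix s t assume s: "s \<in> T0 \<union> T2" and t: "t \<in> T0 \<union> T2" and ne: "s \<noteq> t"
    have c1: "\<And>a b. a \<in> T0 \<Longrightarrow> b \<in> T2 \<Longrightarrow> g b a = 0" using T2Ws by (auto simp: Ws_def)
    have c2: "\<And>a b. a \<in> T0 \<Longrightarrow> b \<in> T2 \<Longrightarrow> g a b = 0" using c1 gsym by metis
    show "g s t = 0" using s t ne T0(2) oT2 c1 c2 by (auto simp: orthon_def)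
  qed
  have cu: "closedJ (T0 \<union> T2)" using T0(3) cT2 unfolding closedJ_def by blast
  have fu: "finite (T0 \<union> T2)" using orthon_finite[OF ou] by simp
  have "[] \<in> H" by (simp add: H_def)
  then have "Ob \<noteq> {}" by (auto simp: Ob_def)
  then have "T2 \<noteq> {}" by (simp add: T2_def)
  then have "card T0 < card (T0 \<union> T2)" using fu disj
    by (metis Int_absorb1 Un_upper1 card_subset_eq finite_Un le_neq_implies_less card_mono sup.absorb_iff2 sup_commute Un_Int_eq(4) Int_empty_left)
  then show ?thesis using T2V ou cu by blast
qed

theorem good_basis:
  "\<exists>T. finite T \<and> T \<subseteq> V \<and> V \<subseteq> span T \<and> orthon T \<and> closedJ T"
proof -
  define P where "P = (\<lambda>T. T \<subseteq> V \<and> orthon T \<and> closedJ T)"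
  have P0: "P {}" by (simp add: P_def orthon_def closedJ_def)
  have bd: "\<forall>T. P T \<longrightarrow> card T < Suc (card Bs)" using orthon_finite by (auto simp: P_def less_Suc_eq_le)
  obtain T where T: "P T" "\<forall>T'. P T' \<longrightarrow> card T' \<le> card T"
    using ex_has_greatest_nat[OF P0 bd] by blast
  have "V \<subseteq> span T"
  proof
    fix x assume x: "x \<in> V"
    show "x \<in> span T"
    proof (rule ccontr)
      assume nx: "x \<notin> span T"
      have TT: "T \<subseteq> V" "orthon T" "closedJ T" using T(1) by (auto simp: P_def)
      obtain T2 where "T2 \<subseteq> V" "orthon (T \<union> T2)" "closedJ (T \<union> T2)" "card T < card (T \<union> T2)"
        using extend[OF TT x nx] by blast
      moreover have "P (T \<union> T2)" using calculation T(1) by (auto simp: P_def)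
      ultimately show False using T(2) by fastforce
    qed
  qed
  then show ?thesis using T(1) orthon_finite by (auto simp: P_def)
qed

end

theorem theorem1p2:
  fixes br :: "'a::real_vector \<Rightarrow> 'a \<Rightarrow> 'a" and g :: "'a \<Rightarrow> 'a \<Rightarrow> real"
  assumes "general_H_type br g"
  shows "\<exists>(m::nat) (n::nat) (v::nat \<Rightarrow> 'a) (z::nat \<Rightarrow> 'a) (A::nat \<Rightarrow> nat \<Rightarrow> nat \<Rightarrow> real).
           orthonormal_basis g (\<lambda>i. if i < m then v i else z (i - m)) (m + n) \<and>
           (\<forall>\<alpha><m. v \<alpha> \<in> orth_compl g (lie_center br)) \<and>
           (\<forall>k<n. z k \<in> lie_center br) \<and>
           (\<forall>\<alpha><m. \<forall>\<beta><m. br (v \<alpha>) (v \<beta>) = (\<Sum>k<n. A k \<alpha> \<beta> *\<^sub>R z k)) \<and>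
           (\<forall>\<alpha><m. \<forall>\<beta><m. \<forall>k<n. A k \<alpha> \<beta> = 1 \<or> A k \<alpha> \<beta> = -1 \<or> A k \<alpha> \<beta> = 0)"
proof -
  define Z where "Z = lie_center br"
  define V where "V = orth_compl g Z"
  note H = assms[unfolded general_H_type_def]
  note HL = H[THEN conjunct2, THEN conjunct2, THEN conjunct2, THEN conjunct2, unfolded Let_def,
     folded Z_def, folded V_def]
  from H[THEN conjunct1] obtain Bs :: "'a set" where B: "finite Bs \<and> span Bs = UNIV" by blast
  have finB: "finite Bs" using B by (rule conjunct1)
  have spanB: "span Bs = UNIV" using B by (rule conjunct2)
  have lb: "lie_bracket br" using H[THEN conjunct2, THEN conjunct1] .
  have tn: "two_step_nilpotent br" using H[THEN conjunct2, THEN conjunct2, THEN conjunct1] .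
  have sp: "scalar_product g" using H[THEN conjunct2, THEN conjunct2, THEN conjunct2, THEN conjunct1] .
  have ndZ: "\<And>x. x \<in> Z \<Longrightarrow> (\<forall>y\<in>Z. g x y = 0) \<Longrightarrow> x = 0"
    using HL[THEN conjunct1] by blast
  have dec: "\<And>x. \<exists>v\<in>V. \<exists>z\<in>Z. x = v + z"
    using HL[THEN conjunct2, THEN conjunct1] by blast
  obtain J0 where J0a: "\<forall>z\<in>Z. \<forall>u\<in>V. J0 z u \<in> V \<and> (\<forall>v\<in>V. g (J0 z u) v = g z (br u v))"
    and J0b: "\<forall>z\<in>Z. \<forall>u\<in>V. \<forall>v\<in>V. g (J0 z u) (J0 z v) = g z z * g u v"
    using HL[THEN conjunct2, THEN conjunct2] by blast
  have J0in: "\<And>z u. z \<in> Z \<Longrightarrow> u \<in> V \<Longrightarrow> J0 z u \<in> V" using J0a by blast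
  have J0p: "\<And>z u w. z \<in> Z \<Longrightarrow> u \<in> V \<Longrightarrow> w \<in> V \<Longrightarrow> g (J0 z u) w = g z (br u w)"
    using J0a by blast
  have J0n: "\<And>z u w. z \<in> Z \<Longrightarrow> u \<in> V \<Longrightarrow> w \<in> V \<Longrightarrow> g (J0 z u) (J0 z w) = g z z * g u w"
    using J0b by blast
  have bil: "bilinear g" and gsym: "\<And>x y. g x y = g y x" and ndg: "\<And>x. (\<forall>y. g x y = 0) \<Longrightarrow> x = 0"
    using sp by (auto simp: scalar_product_def)
  note gs = bilinear_ladd[OF bil] bilinear_radd[OF bil] bilinear_lmul[OF bil] bilinear_rmul[OF bil]
    bilinear_lneg[OF bil] bilinear_rneg[OF bil] bilinear_lsub[OF bil] bilinear_rsub[OF bil]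
    bilinear_lzero[OF bil] bilinear_rzero[OF bil]
  have bb: "bilinear br" and brxx: "\<And>x. br x x = 0" using lb by (auto simp: lie_bracket_def)
  have anti: "\<And>x y. br x y = - br y x"
  proof -
    fix x y
    have "br (x + y) (x + y) = br x (x + y) + br y (x + y)" by (rule bilinear_ladd[OF bb])
    also have "\<dots> = br x x + br x y + (br y x + br y y)" by (simp only: bilinear_radd[OF bb])
    also have "\<dots> = br x y + br y x" by (simp only: brxx add_0_left add_0_right)
    finally have "br x y + br y x = 0" using brxx by metis
    then show "br x y = - br y x" by (simp add: eq_neg_iff_add_eq_0)
  qed
  have nil: "\<And>x y w. br x (br y w) = 0" using tn by (auto simp: two_step_nilpotent_def)
  have brZ: "\<And>u w. br u w \<in> Z"
  proof -
    fix u w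
    have "\<forall>x. br (br u w) x = 0"
    proof
      fix x
      have "br (br u w) x = - br x (br u w)" by (rule anti)
      then show "br (br u w) x = 0" using nil by simp
    qed
    then show "br u w \<in> Z" by (simp add: Z_def lie_center_def)
  qed
  have sZ: "subspace Z" unfolding subspace_def Z_def lie_center_def
    by (auto simp: bilinear_ladd[OF bb] bilinear_lmul[OF bb] bilinear_lzero[OF bb])
  have sV: "subspace V" unfolding subspace_def V_def orth_compl_def
    by (auto simp: gs)
  have VZ: "\<And>v z. v \<in> V \<Longrightarrow> z \<in> Z \<Longrightarrow> g v z = 0" by (auto simp: V_def orth_compl_def)
  have ndV: "\<And>x. x \<in> V \<Longrightarrow> (\<forall>y\<in>V. g x y = 0) \<Longrightarrow> x = 0"
  proof -
    fix x assume x: "x \<in> V" "\<forall>y\<in>V. g x y = 0"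
    have "\<forall>y. g x y = 0"
    proof
      fix y obtain v z where "v \<in> V" "z \<in> Z" "y = v + z" using dec by blast
      then show "g x y = 0" using x VZ by (simp add: gs)
    qed
    then show "x = 0" using ndg by blast
  qed
  have uniq: "\<And>x y. x \<in> V \<Longrightarrow> y \<in> V \<Longrightarrow> (\<And>w. w \<in> V \<Longrightarrow> g x w = g y w) \<Longrightarrow> x = y"
  proof -
    fix x y assume xy: "x \<in> V" "y \<in> V" "\<And>w. w \<in> V \<Longrightarrow> g x w = g y w"
    have "x - y \<in> V" using sV xy by (simp add: subspace_diff)
    moreover have "\<forall>w\<in>V. g (x - y) w = 0" using xy by (simp add: gs)
    ultimately show "x = y" using ndV by fastforce
  qed
  have J0add: "\<And>z u w. z \<in> Z \<Longrightarrow> u \<in> V \<Longrightarrow> w \<in> V \<Longrightarrow> J0 z (u + w) = J0 z u + J0 z w"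
    using sV by (intro uniq) (auto simp: subspace_add J0in J0p gs bilinear_ladd[OF bb])
  have J0sc: "\<And>z u c. z \<in> Z \<Longrightarrow> u \<in> V \<Longrightarrow> J0 z (c *\<^sub>R u) = c *\<^sub>R J0 z u"
    using sV by (intro uniq) (auto simp: subspace_scale J0in J0p gs bilinear_lmul[OF bb])
  have J0zadd: "\<And>z z' u. z \<in> Z \<Longrightarrow> z' \<in> Z \<Longrightarrow> u \<in> V \<Longrightarrow> J0 (z + z') u = J0 z u + J0 z' u"
    using sV sZ by (intro uniq) (auto simp: subspace_add J0in J0p gs)
  have J0skew: "\<And>z u w. z \<in> Z \<Longrightarrow> u \<in> V \<Longrightarrow> w \<in> V \<Longrightarrow> g (J0 z u) w = - g u (J0 z w)"
  proof -
    fix z u w assume a: "z \<in> Z" "u \<in> V" "w \<in> V"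
    have "g (J0 z u) w = g z (br u w)" using J0p a by blast
    also have "\<dots> = - g z (br w u)" using anti[of u w] by (simp add: gs)
    also have "\<dots> = - g (J0 z w) u" using J0p a by simp
    finally show "g (J0 z u) w = - g u (J0 z w)" using gsym by simp
  qed
  interpret cz: cliff g Z 0 "\<lambda>k u. u" "\<lambda>k. 1" Bs
    by unfold_locales (use finB spanB bil gsym sZ ndZ in auto)
  obtain TZ where TZ: "finite TZ" "TZ \<subseteq> Z" "Z \<subseteq> span TZ" "cz.orthon TZ"
    using cz.good_basis by blast
  obtain zs where zs: "set zs = TZ" "distinct zs" using finite_distinct_list[OF TZ(1)] by blast
  define n where "n = length zs"
  have zsZ: "\<And>k. k < n \<Longrightarrow> zs ! k \<in> Z" using TZ(2) zs(1) by (auto simp: n_def)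
  have zsn: "\<And>k. k < n \<Longrightarrow> g (zs!k) (zs!k) = 1 \<or> g (zs!k) (zs!k) = -1"
    using TZ(4) zs(1) by (auto simp: n_def cz.orthon_def)
  have zso: "\<And>k l. k < n \<Longrightarrow> l < n \<Longrightarrow> k \<noteq> l \<Longrightarrow> g (zs!k) (zs!l) = 0"
    using TZ(4) zs by (auto simp: n_def cz.orthon_def nth_eq_iff_index_eq)
  define JJ where "JJ = (\<lambda>k u. J0 (zs ! k) u)"
  define ep where "ep = (\<lambda>k. g (zs ! k) (zs ! k))"
  interpret cv: cliff g V n JJ ep Bs
  proof unfold_locales
    show "finite Bs" "span Bs = UNIV" "bilinear g" "subspace V" by fact+
    show "\<And>x y. g x y = g y x" by (rule gsym)
    show "\<And>x. x \<in> V \<Longrightarrow> \<forall>y\<in>V. g x y = 0 \<Longrightarrow> x = 0" by (rule ndV)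
    show "\<And>k u. k < n \<Longrightarrow> u \<in> V \<Longrightarrow> JJ k u \<in> V" using J0in zsZ by (simp add: JJ_def)
    show "\<And>k u w. k < n \<Longrightarrow> u \<in> V \<Longrightarrow> w \<in> V \<Longrightarrow> JJ k (u + w) = JJ k u + JJ k w"
      using J0add zsZ by (simp add: JJ_def)
    show "\<And>k u c. k < n \<Longrightarrow> u \<in> V \<Longrightarrow> JJ k (c *\<^sub>R u) = c *\<^sub>R JJ k u"
      using J0sc zsZ by (simp add: JJ_def)
    show "\<And>k u w. k < n \<Longrightarrow> u \<in> V \<Longrightarrow> w \<in> V \<Longrightarrow> g (JJ k u) w = - g u (JJ k w)"
      using J0skew zsZ by (simp add: JJ_def)
    show "\<And>k. k < n \<Longrightarrow> pm (ep k)" using zsn by (simp add: ep_def pm_def)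
    show "\<And>k u. k < n \<Longrightarrow> u \<in> V \<Longrightarrow> JJ k (JJ k u) = (- ep k) *\<^sub>R u"
    proof -
      fix k u assume k: "k < n" and u: "u \<in> V"
      show "JJ k (JJ k u) = (- ep k) *\<^sub>R u"
      proof (rule uniq)
        show "JJ k (JJ k u) \<in> V" "(- ep k) *\<^sub>R u \<in> V"
          using J0in zsZ k u sV by (auto simp: JJ_def subspace_scale subspace_neg)
        fix w assume w: "w \<in> V"
        have "g (JJ k (JJ k u)) w = - g (JJ k u) (JJ k w)"
          using J0skew[OF zsZ[OF k] J0in[OF zsZ[OF k] u] w] by (simp add: JJ_def)
        also have "\<dots> = - (ep k * g u w)" using J0n[OF zsZ[OF k] u w] by (simp add: JJ_def ep_def)
        finally show "g (JJ k (JJ k u)) w = g ((- ep k) *\<^sub>R u) w" by (simp add: gs)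
      qed
    qed
    show "\<And>k l u. k < n \<Longrightarrow> l < n \<Longrightarrow> k \<noteq> l \<Longrightarrow> u \<in> V \<Longrightarrow> JJ k (JJ l u) = - JJ l (JJ k u)"
    proof -
      fix k l u assume k: "k < n" and l: "l < n" and kl: "k \<noteq> l" and u: "u \<in> V"
      have zk: "zs!k \<in> Z" and zl: "zs!l \<in> Z" using zsZ k l by auto
      have X: "\<And>w. w \<in> V \<Longrightarrow> g (JJ k u) (JJ l w) + g (JJ l u) (JJ k w) = 0"
      proof -
        fix w assume w: "w \<in> V"
        have zz: "zs!k + zs!l \<in> Z" using sZ zk zl by (simp add: subspace_add)
        have e: "g (J0 (zs!k + zs!l) u) (J0 (zs!k + zs!l) w) = g (zs!k + zs!l) (zs!k + zs!l) * g u w"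
          using J0n[OF zz u w] .
        have "g (zs!k + zs!l) (zs!k + zs!l) = ep k + ep l"
          using zso[OF k l kl] zso[OF l k] kl by (simp add: gs ep_def)
        moreover have "g (J0 (zs!k + zs!l) u) (J0 (zs!k + zs!l) w) =
          ep k * g u w + (g (JJ k u) (JJ l w) + g (JJ l u) (JJ k w)) + ep l * g u w"
          using J0zadd[OF zk zl u] J0zadd[OF zk zl w] J0n[OF zk u w] J0n[OF zl u w]
          by (simp add: gs JJ_def ep_def)
        ultimately show "g (JJ k u) (JJ l w) + g (JJ l u) (JJ k w) = 0" using e
          by (simp add: algebra_simps)
      qed
      show "JJ k (JJ l u) = - JJ l (JJ k u)"
      proof (rule uniq)
        show "JJ k (JJ l u) \<in> V" "- JJ l (JJ k u) \<in> V"
          using J0in zk zl u sV by (auto simp: JJ_def subspace_neg)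
        fix w assume w: "w \<in> V"
        have "g (JJ k (JJ l u)) w = - g (JJ l u) (JJ k w)"
          using J0skew[OF zk J0in[OF zl u] w] by (simp add: JJ_def)
        moreover have "g (- JJ l (JJ k u)) w = g (JJ k u) (JJ l w)"
          using J0skew[OF zl J0in[OF zk u] w] by (simp add: JJ_def gs)
        ultimately show "g (JJ k (JJ l u)) w = g (- JJ l (JJ k u)) w" using X[OF w] by simp
      qed
    qed
  qed
  obtain TV where TV: "finite TV" "TV \<subseteq> V" "V \<subseteq> span TV" "cv.orthon TV" "cv.closedJ TV"
    using cv.good_basis by blast
  obtain vs where vs: "set vs = TV" "distinct vs" using finite_distinct_list[OF TV(1)] by blast
  define m where "m = length vs"
  define b where "b = (\<lambda>i. if i < m then vs ! i else zs ! (i - m))"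
  define A where "A = (\<lambda>k \<alpha> \<beta>. g (br (vs!\<alpha>) (vs!\<beta>)) (zs!k) / g (zs!k) (zs!k))"
  have disj: "TV \<inter> TZ = {}"
  proof (rule ccontr)
    assume "TV \<inter> TZ \<noteq> {}"
    then obtain t where "t \<in> TV" "t \<in> TZ" by blast
    then have "g t t = 0" "g t t = 1 \<or> g t t = -1" using VZ TV(2) TZ(2) TV(4)
      by (auto simp: cv.orthon_def)
    then show False by simp
  qed
  have imgb: "b ` {..<m + n} = TV \<union> TZ"
  proof
    show "b ` {..<m + n} \<subseteq> TV \<union> TZ"
      using vs zs by (auto simp: b_def m_def n_def)
    show "TV \<union> TZ \<subseteq> b ` {..<m + n}"
    proof
      fix t assume "t \<in> TV \<union> TZ"
      then show "t \<in> b ` {..<m + n}"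
      proof
        assume "t \<in> TV"
        then obtain i where "i < m" "t = vs ! i" using vs by (auto simp: m_def in_set_conv_nth)
        then show ?thesis by (auto simp: b_def intro!: image_eqI[of _ _ i])
      next
        assume "t \<in> TZ"
        then obtain i where "i < n" "t = zs ! i" using zs by (auto simp: n_def in_set_conv_nth)
        then show ?thesis by (auto simp: b_def intro!: image_eqI[of _ _ "i + m"])
      qed
    qed
  qed
  have cardU: "card (TV \<union> TZ) = m + n"
    using disj TV(1) TZ(1) vs zs by (simp add: card_Un_disjoint m_def n_def distinct_card[symmetric])
  have injb: "inj_on b {..<m + n}"
    using inj_on_iff_eq_card[of "{..<m+n}" b] imgb cardU by simp
  have oU: "cv.orthon (TV \<union> TZ)"
    unfolding cv.orthon_def
  proof (intro conjI ballI impI)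
    fix t assume "t \<in> TV \<union> TZ"
    then show "g t t = 1 \<or> g t t = -1" using TV(4) TZ(4) by (auto simp: cv.orthon_def cz.orthon_def)
  next
    fix s t assume s: "s \<in> TV \<union> TZ" and t: "t \<in> TV \<union> TZ" and ne: "s \<noteq> t"
    have c1: "\<And>a c. a \<in> TV \<Longrightarrow> c \<in> TZ \<Longrightarrow> g a c = 0" using VZ TV(2) TZ(2) by blast
    have c2: "\<And>a c. a \<in> TV \<Longrightarrow> c \<in> TZ \<Longrightarrow> g c a = 0" using c1 gsym by metis
    show "g s t = 0" using s t ne TV(4) TZ(4) c1 c2 by (auto simp: cv.orthon_def cz.orthon_def)
  qed
  have ob: "orthonormal_basis g b (m + n)"
    unfolding orthonormal_basis_def
  proof (intro conjI)
    show "inj_on b {..<m + n}" by (rule injb)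
    show "independent (b ` {..<m + n})" using cv.orthon_indep[OF oU] imgb by simp
    show "span (b ` {..<m + n}) = UNIV"
    proof -
      have "\<And>x. x \<in> span (TV \<union> TZ)"
      proof -
        fix x obtain v z where vz: "v \<in> V" "z \<in> Z" "x = v + z" using dec by blast
        have "v \<in> span (TV \<union> TZ)" using vz TV(3) real_vector.span_mono[of TV "TV \<union> TZ"] by blast
        moreover have "z \<in> span (TV \<union> TZ)" using vz TZ(3) real_vector.span_mono[of TZ "TV \<union> TZ"] by blast
        ultimately show "x \<in> span (TV \<union> TZ)" using vz by (simp add: real_vector.span_add)
      qed
      then show ?thesis using imgb by auto
    qed
    show "\<forall>i<m + n. \<forall>j<m + n. i \<noteq> j \<longrightarrow> g (b i) (b j) = 0"
    proof (intro allI impI)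
      fix i j assume "i < m + n" "j < m + n" "i \<noteq> j"
      then have "b i \<noteq> b j" "b i \<in> TV \<union> TZ" "b j \<in> TV \<union> TZ"
        using injb imgb by (auto dest: inj_onD)
      then show "g (b i) (b j) = 0" using oU by (auto simp: cv.orthon_def)
    qed
    show "\<forall>i<m + n. g (b i) (b i) = 1 \<or> g (b i) (b i) = -1"
    proof (intro allI impI)
      fix i assume "i < m + n"
      then have "b i \<in> TV \<union> TZ" using imgb by auto
      then show "g (b i) (b i) = 1 \<or> g (b i) (b i) = -1" using oU by (auto simp: cv.orthon_def)
    qed
  qed
  have vsV: "\<And>a. a < m \<Longrightarrow> vs ! a \<in> V" using vs TV(2) by (auto simp: m_def)
  have expand: "\<And>w. w \<in> Z \<Longrightarrow> w = (\<Sum>k<n. (g w (zs!k) / g (zs!k) (zs!k)) *\<^sub>R zs ! k)"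
  proof -
    fix w assume w: "w \<in> Z"
    have bij: "bij_betw ((!) zs) {..<n} TZ" using bij_betw_nth[OF zs(2)] zs(1) by (simp add: n_def)
    define S where "S = (\<Sum>t\<in>TZ. (g w t / g t t) *\<^sub>R t)"
    have SS: "(\<Sum>k<n. (g w (zs!k) / g (zs!k) (zs!k)) *\<^sub>R zs ! k) = S"
      unfolding S_def using sum.reindex_bij_betw[OF bij, of "\<lambda>t. (g w t / g t t) *\<^sub>R t"] by simp
    define y where "y = w - S"
    have SZ: "S \<in> Z" unfolding S_def using sZ TZ(2)
      by (intro subspace_sum) (auto intro: subspace_scale)
    have yZ: "y \<in> Z" using sZ w SZ by (simp add: y_def subspace_diff)
    have yT: "\<And>t. t \<in> TZ \<Longrightarrow> g y t = 0"
    proof -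
      fix t assume t: "t \<in> TZ"
      have "g t t \<noteq> 0" using TZ(4) t by (auto simp: cz.orthon_def)
      then show "g y t = 0" unfolding y_def S_def
        using cz.orthon_sum[OF TZ(1) TZ(4) t, of "\<lambda>t. g w t / g t t"] by (simp add: gs)
    qed
    have "\<forall>z'\<in>Z. g y z' = 0"
    proof
      fix z' assume "z' \<in> Z"
      then have zs': "z' \<in> span TZ" using TZ(3) by blast
      have "subspace (Collect (\<lambda>x. g y x = 0))" unfolding subspace_def by (simp add: gs)
      then show "g y z' = 0" using real_vector.span_induct[OF zs'] yT by blast
    qed
    then have "y = 0" using ndZ yZ by blast
    then show "w = (\<Sum>k<n. (g w (zs!k) / g (zs!k) (zs!k)) *\<^sub>R zs ! k)" using SS by (simp add: y_def)
  qed
  have brexp: "\<forall>\<alpha><m. \<forall>\<beta><m. br (vs!\<alpha>) (vs!\<beta>) = (\<Sum>k<n. A k \<alpha> \<beta> *\<^sub>R zs ! k)"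
    using expand[OF brZ] by (simp add: A_def)
  have Avals: "\<forall>\<alpha><m. \<forall>\<beta><m. \<forall>k<n. A k \<alpha> \<beta> = 1 \<or> A k \<alpha> \<beta> = -1 \<or> A k \<alpha> \<beta> = 0"
  proof (intro allI impI)
    fix a c k assume a: "a < m" and c: "c < m" and k: "k < n"
    have va: "vs!a \<in> TV" and vc: "vs!c \<in> TV" using a c vs by (auto simp: m_def)
    have e1: "g (br (vs!a) (vs!c)) (zs!k) = g (JJ k (vs!a)) (vs!c)"
      using J0p[OF zsZ[OF k] vsV[OF a] vsV[OF c]] gsym by (simp add: JJ_def)
    obtain t where t: "t \<in> TV" "JJ k (vs!a) = t \<or> JJ k (vs!a) = - t"
      using TV(5) k va by (auto simp: cv.closedJ_def)
    have gt: "g t (vs!c) = 1 \<or> g t (vs!c) = -1 \<or> g t (vs!c) = 0"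
      using TV(4) t(1) vc by (cases "t = vs!c") (auto simp: cv.orthon_def)
    have "g (JJ k (vs!a)) (vs!c) = 1 \<or> g (JJ k (vs!a)) (vs!c) = -1 \<or> g (JJ k (vs!a)) (vs!c) = 0"
      using t(2) gt by (auto simp: gs)
    then show "A k a c = 1 \<or> A k a c = -1 \<or> A k a c = 0"
      using zsn[OF k] e1 by (auto simp: A_def)
  qed
  have ob': "orthonormal_basis g (\<lambda>i. if i < m then vs ! i else zs ! (i - m)) (m + n)"
    using ob unfolding b_def .
  show ?thesis
    apply (rule exI[of _ m], rule exI[of _ n], rule exI[of _ "\<lambda>i. vs ! i"],
      rule exI[of _ "\<lambda>k. zs ! k"], rule exI[of _ A])
    apply (intro conjI)
    subgoal using ob' by simp
    subgoal using vsV by (simp add: V_def Z_def)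
    subgoal using zsZ by (simp add: Z_def)
    subgoal using brexp by simp
    subgoal using Avals by simp
    done
qed

end
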